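(* Let $\delta>0$ and let $\mathcal{M}^{(1)},\mathcal{M}^{(2)}$ be two RMMDPs on the same $\mathcal S,\mathcal A,\mathcal Z$ and horizon $H$, with the same transition kernel $T$ and the same initial state distribution $\nu$, but with possibly different mixing weights and latent reward models and with $M_1$ and $M_2$ latent contexts respectively. Let $d:=\min(H,M_1+M_2-1)$ and define $$\mathcal X_d:=\Big\{\mathbf x\in(\mathcal S\times\mathcal A)^{d}\ :\ \forall\,\mathbf z\in\mathcal Z^{d},\ \max_{\mathcal I\subseteq[d]}\big|\mathbf M^{(1)}(\mathbf x_{\mathcal I},\mathbf z_{\mathcal I})-\mathbf M^{(2)}(\mathbf x_{\mathcal I},\mathbf z_{\mathcal I})\big|\le\delta\Big\},$$ $$\mathcal E_{\rm tot}:=\Big\{x_{1:H}\in(\mathcal S\times\mathcal A)^{H}\ :\ \forall\,1\le t_1<\dots<t_d\le H,\ (x_{t_q})_{q=1}^{d}\in\mathcal X_d\Big\}.$$ Then for every subset $\mathcal E\subseteq\mathcal E_{\rm tot}$ and every history-dependent policy $\pi\in\Pi$, $$\sum_{\tau:\,x_{1:H}\in\mathcal E}\big|\mathbb P^{(1)}_\pi(\tau)-\mathbb P^{(2)}_\pi(\tau)\big|\le\sup_{\pi'\in\Pi}\mathbb P^{(1)}_{\pi'}(x_{1:H}\in\mathcal E)\cdot(4HZ)^{d}\cdot\delta .$$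
   Context: An RMMDP (reward-mixing MDP) $\mathcal M=(\mathcal S,\mathcal A,T,\nu,\{w_m\}_{m=1}^M,\{\mu_m\}_{m=1}^M)$ has finite state space $\mathcal S$ ($S=|\mathcal S|$), finite action space $\mathcal A$ ($A=|\mathcal A|$), transition kernel $T(s'|s,a)$, initial distribution $\nu$, mixing weights $w_m\ge0$ summing to $1$, and reward models $\mu_m(s,a,z)=\mathbb P(r=z\mid m,s,a)$ supported on a finite set $\mathcal Z\subset[-1,1]$ with $Z=|\mathcal Z|$. An episode of horizon $H$: a latent context $m$ is drawn with probability $w_m$ (unobserved), $s_1\sim\nu$, and for $t=1,\dots,H$ the agent chooses $a_t$, receives $r_t\sim\mu_m(s_t,a_t,\cdot)$ and (if $t<H$) $s_{t+1}\sim T(\cdot|s_t,a_t)$. Write $x_t=(s_t,a_t)$, $\tau=(s_t,a_t,r_t)_{t=1}^H$, and $h_t=(s_1,a_1,r_1,\dots,s_{t-1},a_{t-1},r_{t-1},s_t)$. $\Pi$ is the class of all history-dependent (possibly randomized) policies $\pi(a_t\mid h_t)$. For $\pi\in\Pi$, $\mathbb P_\pi(\tau)=\nu(s_1)\prod_{t=1}^{H-1}T(s_{t+1}|s_t,a_t)\prod_{t=1}^H\pi(a_t|h_t)\sum_{m}w_m\prod_{t=1}^H\mu_m(x_t,r_t)$, and $\mathbb P_\pi(x_{1:H}\in\mathcal E)$ is the probability that the state–action part of the trajectory lies in $\mathcal E$. For sequences $\mathbf x=(x_i)_{i=1}^q\in(\mathcal S\times\mathcal A)^q$, $\mathbf z=(z_i)_{i=1}^q\in\mathcal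 Z^q$, the moment is $\mathbf M(\mathbf x,\mathbf z)=\sum_m w_m\prod_{i=1}^q\mu_m(x_i,z_i)$ (equal to $1$ for the empty sequence); for $\mathcal I\subseteq[q]$, $\mathbf x_{\mathcal I}=(x_i)_{i\in\mathcal I}$ is the subsequence at positions $\mathcal I$. Superscripts $(1),(2)$ refer to quantities of $\mathcal M^{(1)},\mathcal M^{(2)}$. *)

theory Defs
  imports Main "HOL-Library.FuncSet" Complex_Main
begin

text \<open>A trajectory is a list of triples (s_t, a_t, r_t), t = 1..H (list index t-1).
  Latent contexts of a model with M contexts are the naturals m < M.
  Transition kernel: T s a s' = T(s'|s,a).
  Reward model: mu m s a z = P(r = z | m, s, a).
  History-dependent randomized policy: pi h s a = pi(a | h_t), where h is the
  list of past triples (s_1,a_1,r_1),...,(s_{t-1},a_{t-1},r_{t-1}) and s = s_t.\<close>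

definition rmmdp ::
  "'s set \<Rightarrow> 'a set \<Rightarrow> real set \<Rightarrow> ('s \<Rightarrow> 'a \<Rightarrow> 's \<Rightarrow> real) \<Rightarrow> ('s \<Rightarrow> real)
   \<Rightarrow> nat \<Rightarrow> (nat \<Rightarrow> real) \<Rightarrow> (nat \<Rightarrow> 's \<Rightarrow> 'a \<Rightarrow> real \<Rightarrow> real) \<Rightarrow> bool" where
  "rmmdp S A Z T \<nu> M w \<mu> \<longleftrightarrow>
     finite S \<and> S \<noteq> {} \<and> finite A \<and> A \<noteq> {} \<and> finite Z \<and> Z \<noteq> {} \<and> Z \<subseteq> {-1..1} \<and>
     (\<forall>s\<in>S. \<nu> s \<ge> 0) \<and> (\<Sum>s\<in>S. \<nu> s) = 1 \<and>
     (\<forall>s\<in>S. \<forall>a\<in>A. (\<forall>s'\<in>S. T s a s' \<ge> 0) \<and> (\<Sum>s'\<in>S. T s a s') = 1) \<and>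
     (\<forall>m<M. w m \<ge> 0) \<and> (\<Sum>m<M. w m) = 1 \<and>
     (\<forall>m<M. \<forall>s\<in>S. \<forall>a\<in>A. (\<forall>z\<in>Z. \<mu> m s a z \<ge> 0) \<and> (\<Sum>z\<in>Z. \<mu> m s a z) = 1)"

definition policies :: "'s set \<Rightarrow> 'a set \<Rightarrow> (('s \<times> 'a \<times> real) list \<Rightarrow> 's \<Rightarrow> 'a \<Rightarrow> real) set" where
  "policies S A = {\<pi>. \<forall>h. \<forall>s\<in>S. (\<forall>a\<in>A. \<pi> h s a \<ge> 0) \<and> (\<Sum>a\<in>A. \<pi> h s a) = 1}"

definition trajs :: "'s set \<Rightarrow> 'a set \<Rightarrow> real set \<Rightarrow> nat \<Rightarrow> ('s \<times> 'a \<times> real) list set" where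
  "trajs S A Z H = {\<tau>. length \<tau> = H \<and> set \<tau> \<subseteq> S \<times> A \<times> Z}"

definition sa_part :: "('s \<times> 'a \<times> real) list \<Rightarrow> ('s \<times> 'a) list" where
  "sa_part \<tau> = map (\<lambda>(s,a,r). (s,a)) \<tau>"

definition traj_prob ::
  "('s \<Rightarrow> 'a \<Rightarrow> 's \<Rightarrow> real) \<Rightarrow> ('s \<Rightarrow> real) \<Rightarrow> nat \<Rightarrow> (nat \<Rightarrow> real) \<Rightarrow> (nat \<Rightarrow> 's \<Rightarrow> 'a \<Rightarrow> real \<Rightarrow> real)
   \<Rightarrow> (('s \<times> 'a \<times> real) list \<Rightarrow> 's \<Rightarrow> 'a \<Rightarrow> real) \<Rightarrow> ('s \<times> 'a \<times> real) list \<Rightarrow> real" where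
  "traj_prob T \<nu> M w \<mu> \<pi> \<tau> =
     (let H = length \<tau>;
          st = (\<lambda>t. fst (\<tau> ! t)); ac = (\<lambda>t. fst (snd (\<tau> ! t))); rw = (\<lambda>t. snd (snd (\<tau> ! t)))
      in \<nu> (st 0) * (\<Prod>t<H - 1. T (st t) (ac t) (st (Suc t)))
         * (\<Prod>t<H. \<pi> (take t \<tau>) (st t) (ac t))
         * (\<Sum>m<M. w m * (\<Prod>t<H. \<mu> m (st t) (ac t) (rw t))))"

definition event_prob ::
  "'s set \<Rightarrow> 'a set \<Rightarrow> real set \<Rightarrow> nat \<Rightarrow> ('s \<Rightarrow> 'a \<Rightarrow> 's \<Rightarrow> real) \<Rightarrow> ('s \<Rightarrow> real) \<Rightarrow> nat \<Rightarrow> (nat \<Rightarrow> real)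
   \<Rightarrow> (nat \<Rightarrow> 's \<Rightarrow> 'a \<Rightarrow> real \<Rightarrow> real) \<Rightarrow> (('s \<times> 'a \<times> real) list \<Rightarrow> 's \<Rightarrow> 'a \<Rightarrow> real)
   \<Rightarrow> ('s \<times> 'a) list set \<Rightarrow> real" where
  "event_prob S A Z H T \<nu> M w \<mu> \<pi> E =
     (\<Sum>\<tau>\<in>{\<tau>\<in>trajs S A Z H. sa_part \<tau> \<in> E}. traj_prob T \<nu> M w \<mu> \<pi> \<tau>)"

definition moment ::
  "nat \<Rightarrow> (nat \<Rightarrow> real) \<Rightarrow> (nat \<Rightarrow> 's \<Rightarrow> 'a \<Rightarrow> real \<Rightarrow> real) \<Rightarrow> ('s \<times> 'a) list \<Rightarrow> real list \<Rightarrow> real" where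
  "moment M w \<mu> xs zs =
     (\<Sum>m<M. w m * (\<Prod>i<length xs. \<mu> m (fst (xs ! i)) (snd (xs ! i)) (zs ! i)))"

text \<open>The set X_d; subsequences x_I are nths x I for I subset of [d] = {0..<d}.\<close>
definition Xset ::
  "'s set \<Rightarrow> 'a set \<Rightarrow> real set \<Rightarrow> nat \<Rightarrow> real \<Rightarrow> nat \<Rightarrow> (nat \<Rightarrow> real) \<Rightarrow> (nat \<Rightarrow> 's \<Rightarrow> 'a \<Rightarrow> real \<Rightarrow> real)
   \<Rightarrow> nat \<Rightarrow> (nat \<Rightarrow> real) \<Rightarrow> (nat \<Rightarrow> 's \<Rightarrow> 'a \<Rightarrow> real \<Rightarrow> real) \<Rightarrow> ('s \<times> 'a) list set" where
  "Xset S A Z d \<delta> M1 w1 \<mu>1 M2 w2 \<mu>2 =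
     {xs. length xs = d \<and> set xs \<subseteq> S \<times> A \<and>
        (\<forall>zs. length zs = d \<and> set zs \<subseteq> Z \<longrightarrow>
           (\<forall>I\<subseteq>{..<d}. \<bar>moment M1 w1 \<mu>1 (nths xs I) (nths zs I)
                          - moment M2 w2 \<mu>2 (nths xs I) (nths zs I)\<bar> \<le> \<delta>))}"

text \<open>E_tot: every length-d subsequence (positions t_1 < ... < t_d, i.e. a d-element
  set of positions in {0..<H}) lies in X_d.\<close>
definition Etot ::
  "'s set \<Rightarrow> 'a set \<Rightarrow> nat \<Rightarrow> nat \<Rightarrow> ('s \<times> 'a) list set \<Rightarrow> ('s \<times> 'a) list set" where
  "Etot S A H d X = {xs. length xs = H \<and> set xs \<subseteq> S \<times> A \<and>
      (\<forall>P\<subseteq>{..<H}. card P = d \<longrightarrow> nths xs P \<in> X)}"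

end

theory Submission
  imports Defs
begin

definition cnt :: "nat set \<Rightarrow> nat \<Rightarrow> nat" where
  "cnt C s = card {t\<in>C. t < s}"

lemma cnt_insert_less: "t < n \<Longrightarrow> cnt (insert n C) t = cnt C t"
  unfolding cnt_def by (rule arg_cong[where f=card]) auto

lemma cnt_all: "C \<subseteq> {..<n} \<Longrightarrow> cnt C n = card C"
  unfolding cnt_def by (rule arg_cong[where f=card]) auto

lemma cnt_insert_top: "C \<subseteq> {..<n} \<Longrightarrow> cnt (insert n C) n = card C"
  unfolding cnt_def by (rule arg_cong[where f=card]) auto

lemma expand_atom:
  fixes v :: "nat \<Rightarrow> real" and b :: "nat \<Rightarrow> nat \<Rightarrow> real"
  shows "(\<Prod>s<n. v s) = (\<Sum>C\<in>Pow {..<n}. (\<Prod>t\<in>C. v t - b (cnt C t) t) * (\<Prod>s\<in>{..<n}-C. b (cnt C s) s))"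
proof (induction n)
  case 0
  then show ?case by simp
next
  case (Suc n)
  let ?F = "\<lambda>m C. (\<Prod>t\<in>C. v t - b (cnt C t) t) * (\<Prod>s\<in>{..<m}-C. b (cnt C s) s)"
  have pow: "Pow {..<Suc n} = Pow {..<n} \<union> insert n ` Pow {..<n}"
    using Pow_insert[of n "{..<n}"] by (simp add: lessThan_Suc)
  have disj: "Pow {..<n} \<inter> insert n ` Pow {..<n} = {}" by auto
  have inj: "inj_on (insert n) (Pow {..<n})"
    by (rule inj_onI) (auto simp: insert_ident subset_eq)
  have A: "?F (Suc n) C = ?F n C * b (card C) n" if "C \<in> Pow {..<n}" for C
  proof -
    have "{..<Suc n} - C = insert n ({..<n} - C)" using that by (auto simp: lessThan_Suc)
    then have "(\<Prod>s\<in>{..<Suc n}-C. b (cnt C s) s) = b (cnt C n) n * (\<Prod>s\<in>{..<n}-C. b (cnt C s) s)"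
      by simp
    then show ?thesis using that cnt_all[of C n] by simp
  qed
  have B: "?F (Suc n) (insert n C) = ?F n C * (v n - b (card C) n)" if "C \<in> Pow {..<n}" for C
  proof -
    have C: "C \<subseteq> {..<n}" "n \<notin> C" "finite C" using that finite_subset by auto
    have 1: "(\<Prod>t\<in>insert n C. v t - b (cnt (insert n C) t) t)
           = (v n - b (card C) n) * (\<Prod>t\<in>C. v t - b (cnt C t) t)"
      using C by (simp add: cnt_insert_top cnt_insert_less subset_eq cong: prod.cong)
    have 2: "{..<Suc n} - insert n C = {..<n} - C" by (auto simp: lessThan_Suc)
    have 3: "(\<Prod>s\<in>{..<n}-C. b (cnt (insert n C) s) s) = (\<Prod>s\<in>{..<n}-C. b (cnt C s) s)"
      by (rule prod.cong) (auto simp: cnt_insert_less)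
    show ?thesis using 1 2 3 by simp
  qed
  have "(\<Sum>C\<in>Pow {..<Suc n}. ?F (Suc n) C)
      = (\<Sum>C\<in>Pow {..<n}. ?F (Suc n) C) + (\<Sum>C\<in>insert n ` Pow {..<n}. ?F (Suc n) C)"
    unfolding pow by (rule sum.union_disjoint) (auto simp: disj)
  also have "(\<Sum>C\<in>insert n ` Pow {..<n}. ?F (Suc n) C) = (\<Sum>C\<in>Pow {..<n}. ?F (Suc n) (insert n C))"
    by (rule sum.reindex[OF inj, unfolded comp_def])
  also have "(\<Sum>C\<in>Pow {..<n}. ?F (Suc n) C) + (\<Sum>C\<in>Pow {..<n}. ?F (Suc n) (insert n C))
      = (\<Sum>C\<in>Pow {..<n}. ?F n C * v n)"
    unfolding sum.distrib[symmetric]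
  proof (rule sum.cong)
    fix C assume "C \<in> Pow {..<n}"
    then show "?F (Suc n) C + ?F (Suc n) (insert n C) = ?F n C * v n"
      unfolding A[OF \<open>C \<in> Pow {..<n}\<close>] B[OF \<open>C \<in> Pow {..<n}\<close>] by (simp add: algebra_simps)
  qed simp
  also have "\<dots> = (\<Prod>s<n. v s) * v n" using Suc by (simp add: sum_distrib_right)
  finally show ?case by simp
qed

lemma cnt_le: "finite C \<Longrightarrow> cnt C s \<le> card C"
  unfolding cnt_def by (rule card_mono) auto

lemma cnt_less: "finite C \<Longrightarrow> t \<in> C \<Longrightarrow> cnt C t < card C"
  unfolding cnt_def by (rule psubset_card_mono) auto

lemma cnt_mono_strict: "finite C \<Longrightarrow> t1 \<in> C \<Longrightarrow> t1 < t2 \<Longrightarrow> cnt C t1 < cnt C t2"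
  unfolding cnt_def by (rule psubset_card_mono) auto

lemma cnt_inj: "finite C \<Longrightarrow> inj_on (cnt C) C"
proof (rule inj_onI)
  fix x y assume "finite C" "x \<in> C" "y \<in> C" "cnt C x = cnt C y"
  then show "x = y"
    by (metis cnt_mono_strict less_irrefl nat_neq_iff)
qed

lemma cnt_image: "finite C \<Longrightarrow> cnt C ` C = {..<card C}"
proof -
  assume f: "finite C"
  have "cnt C ` C \<subseteq> {..<card C}" using cnt_less[OF f] by auto
  moreover have "card (cnt C ` C) = card {..<card C}"
    using card_image[OF cnt_inj[OF f]] by simp
  ultimately show ?thesis by (simp add: card_subset_eq)
qed

lemma vanish:
  fixes v :: "'k \<Rightarrow> nat \<Rightarrow> real"
  assumes "finite C" "K \<le> card C" "k \<in> \<kappa> ` {..<K}"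
  shows "(\<Prod>t\<in>C. v k t - v (\<kappa> (cnt C t)) t) = 0"
proof -
  obtain j where j: "j < K" "k = \<kappa> j" using assms(3) by auto
  then have "j \<in> cnt C ` C" using cnt_image[OF assms(1)] assms(2) by auto
  then obtain t where t: "t \<in> C" "cnt C t = j" by auto
  show ?thesis using t j assms(1) by (intro prod_zero) auto
qed

lemma bracket_expand:
  fixes v :: "'k \<Rightarrow> nat \<Rightarrow> real"
  assumes "finite C"
  shows "(\<Sum>k\<in>Ks. c k * (\<Prod>t\<in>C. v k t - \<beta> t))
       = (\<Sum>J\<in>Pow C. (\<Prod>t\<in>C-J. - \<beta> t) * (\<Sum>k\<in>Ks. c k * (\<Prod>t\<in>J. v k t)))"
proof -
  have e: "(\<Prod>t\<in>C. v k t - \<beta> t) = (\<Sum>J\<in>Pow C. (\<Prod>t\<in>J. v k t) * (\<Prod>t\<in>C-J. - \<beta> t))" for k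
    using prod_add[OF assms, of "\<lambda>t. v k t" "\<lambda>t. - \<beta> t"] by (simp only: diff_conv_add_uminus)
  have "(\<Sum>k\<in>Ks. c k * (\<Prod>t\<in>C. v k t - \<beta> t))
      = (\<Sum>k\<in>Ks. \<Sum>J\<in>Pow C. c k * ((\<Prod>t\<in>J. v k t) * (\<Prod>t\<in>C-J. - \<beta> t)))"
    by (simp only: e sum_distrib_left)
  also have "\<dots> = (\<Sum>J\<in>Pow C. \<Sum>k\<in>Ks. c k * ((\<Prod>t\<in>J. v k t) * (\<Prod>t\<in>C-J. - \<beta> t)))"
    by (rule sum.swap)
  also have "\<dots> = (\<Sum>J\<in>Pow C. (\<Prod>t\<in>C-J. - \<beta> t) * (\<Sum>k\<in>Ks. c k * (\<Prod>t\<in>J. v k t)))"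
    by (rule sum.cong[OF refl]) (simp add: sum_distrib_left mult_ac)
  finally show ?thesis .
qed

lemma decomp_bound:
  fixes v :: "'k \<Rightarrow> nat \<Rightarrow> real" and c :: "'k \<Rightarrow> real"
  assumes Ks: "finite Ks" "Ks \<subseteq> \<kappa> ` {..<K}"
    and nn: "\<forall>j<K. \<forall>t<n. v (\<kappa> j) t \<ge> 0"
    and small: "\<forall>J\<subseteq>{..<n}. card J < K \<longrightarrow> \<bar>\<Sum>k\<in>Ks. c k * (\<Prod>t\<in>J. v k t)\<bar> \<le> \<delta>"
  shows "\<bar>\<Sum>k\<in>Ks. c k * (\<Prod>s<n. v k s)\<bar>
     \<le> \<delta> * (\<Sum>C\<in>{C\<in>Pow {..<n}. card C < K}. \<Sum>J\<in>Pow C. \<Prod>s\<in>{..<n}-J. v (\<kappa> (cnt C s)) s)"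
proof -
  define \<beta> where "\<beta> C s = v (\<kappa> (cnt C s)) s" for C s
  define X where "X C = (\<Sum>k\<in>Ks. c k * (\<Prod>t\<in>C. v k t - \<beta> C t))" for C
  define R where "R C = (\<Prod>s\<in>{..<n}-C. \<beta> C s)" for C
  define Cs where "Cs = {C\<in>Pow {..<n}. card C < K}"
  define Ds where "Ds = {C\<in>Pow {..<n}. \<not> card C < K}"
  have fin: "finite (Pow {..<n::nat})" by simp
  have "(\<Sum>k\<in>Ks. c k * (\<Prod>s<n. v k s)) = (\<Sum>k\<in>Ks. \<Sum>C\<in>Pow {..<n}. c k * ((\<Prod>t\<in>C. v k t - \<beta> C t) * R C))"
  proof -
    have e: "(\<Prod>s<n. v k s) = (\<Sum>C\<in>Pow {..<n}. (\<Prod>t\<in>C. v k t - \<beta> C t) * R C)" for k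
      unfolding R_def \<beta>_def by (rule expand_atom)
    show ?thesis by (simp only: e sum_distrib_left)
  qed
  also have "\<dots> = (\<Sum>C\<in>Pow {..<n}. \<Sum>k\<in>Ks. c k * ((\<Prod>t\<in>C. v k t - \<beta> C t) * R C))"
    by (rule sum.swap)
  also have "\<dots> = (\<Sum>C\<in>Pow {..<n}. X C * R C)"
    unfolding X_def by (rule sum.cong[OF refl]) (simp add: sum_distrib_right sum_distrib_left mult_ac)
  also have "\<dots> = (\<Sum>C\<in>Cs. X C * R C) + (\<Sum>C\<in>Ds. X C * R C)"
  proof -
    have u: "Pow {..<n} = Cs \<union> Ds" unfolding Cs_def Ds_def by auto
    have f: "finite Cs" "finite Ds" unfolding Cs_def Ds_def by auto
    have d: "Cs \<inter> Ds = {}" unfolding Cs_def Ds_def by auto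
    show ?thesis unfolding u by (rule sum.union_disjoint[OF f d])
  qed
  also have "(\<Sum>C\<in>Ds. X C * R C) = 0"
  proof (rule sum.neutral, rule ballI)
    fix C assume "C \<in> Ds"
    then have C: "finite C" "K \<le> card C" unfolding Ds_def using finite_subset by auto
    have "X C = 0" unfolding X_def \<beta>_def
      using vanish[OF C, of _ \<kappa> v] Ks(2) by (intro sum.neutral) auto
    then show "X C * R C = 0" by simp
  qed
  finally have eq: "(\<Sum>k\<in>Ks. c k * (\<Prod>s<n. v k s)) = (\<Sum>C\<in>Cs. X C * R C)" by simp
  have bnn: "\<beta> C s \<ge> 0" if "C \<in> Cs" "s < n" for C s
  proof -
    have "finite C" "card C < K" using that finite_subset unfolding Cs_def by auto
    then have "cnt C s < K" using cnt_le[of C s] by linarith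
    then show ?thesis unfolding \<beta>_def using nn that(2) by auto
  qed
  have Rnn: "R C \<ge> 0" if "C \<in> Cs" for C
    unfolding R_def using bnn[OF that] by (intro prod_nonneg) auto
  have Xb: "\<bar>X C\<bar> \<le> \<delta> * (\<Sum>J\<in>Pow C. \<Prod>t\<in>C-J. \<beta> C t)" if "C \<in> Cs" for C
  proof -
    have C: "finite C" "C \<subseteq> {..<n}" "card C < K" using that finite_subset unfolding Cs_def by auto
    have "X C = (\<Sum>J\<in>Pow C. (\<Prod>t\<in>C-J. - \<beta> C t) * (\<Sum>k\<in>Ks. c k * (\<Prod>t\<in>J. v k t)))"
      unfolding X_def by (rule bracket_expand[OF C(1)])
    also have "\<bar>\<dots>\<bar> \<le> (\<Sum>J\<in>Pow C. \<bar>(\<Prod>t\<in>C-J. - \<beta> C t) * (\<Sum>k\<in>Ks. c k * (\<Prod>t\<in>J. v k t))\<bar>)"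
      by (rule sum_abs)
    also have "\<dots> \<le> (\<Sum>J\<in>Pow C. (\<Prod>t\<in>C-J. \<beta> C t) * \<delta>)"
    proof (rule sum_mono)
      fix J assume J: "J \<in> Pow C"
      have "\<bar>\<Prod>t\<in>C-J. - \<beta> C t\<bar> = (\<Prod>t\<in>C-J. \<beta> C t)"
        unfolding abs_prod using bnn[OF that] C(2) by (intro prod.cong) auto
      moreover have "\<bar>\<Sum>k\<in>Ks. c k * (\<Prod>t\<in>J. v k t)\<bar> \<le> \<delta>"
        using small J C card_mono[OF C(1), of J] by auto
      moreover have "(\<Prod>t\<in>C-J. \<beta> C t) \<ge> 0" using bnn[OF that] C(2) by (intro prod_nonneg) auto
      ultimately show "\<bar>(\<Prod>t\<in>C-J. - \<beta> C t) * (\<Sum>k\<in>Ks. c k * (\<Prod>t\<in>J. v k t))\<bar> \<le> (\<Prod>t\<in>C-J. \<beta> C t) * \<delta>"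
        by (simp add: abs_mult mult_left_mono)
    qed
    finally show ?thesis by (simp add: sum_distrib_left mult_ac)
  qed
  have "\<bar>\<Sum>C\<in>Cs. X C * R C\<bar> \<le> (\<Sum>C\<in>Cs. \<bar>X C * R C\<bar>)" by (rule sum_abs)
  also have "\<dots> = (\<Sum>C\<in>Cs. \<bar>X C\<bar> * R C)"
    by (rule sum.cong[OF refl]) (simp add: abs_mult Rnn)
  also have "\<dots> \<le> (\<Sum>C\<in>Cs. \<delta> * (\<Sum>J\<in>Pow C. \<Prod>t\<in>C-J. \<beta> C t) * R C)"
    using Xb Rnn by (intro sum_mono mult_right_mono) auto
  also have "\<dots> = \<delta> * (\<Sum>C\<in>Cs. \<Sum>J\<in>Pow C. \<Prod>s\<in>{..<n}-J. \<beta> C s)"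
  proof -
    have "(\<Prod>t\<in>C-J. \<beta> C t) * R C = (\<Prod>s\<in>{..<n}-J. \<beta> C s)" if "C \<in> Cs" "J \<in> Pow C" for C J
    proof -
      have "{..<n}-J = (C-J) \<union> ({..<n}-C)" using that unfolding Cs_def by auto
      moreover have "finite C" using that finite_subset unfolding Cs_def by auto
      ultimately show ?thesis unfolding R_def by (simp add: prod.union_disjoint Diff_Int_distrib2)
    qed
    then have "\<delta> * (\<Sum>J\<in>Pow C. \<Prod>t\<in>C-J. \<beta> C t) * R C = \<delta> * (\<Sum>J\<in>Pow C. \<Prod>s\<in>{..<n}-J. \<beta> C s)"
      if "C \<in> Cs" for C
      using that by (simp add: sum_distrib_right mult.assoc)
    then show ?thesis by (simp add: sum_distrib_left)
  qed
  finally show ?thesis unfolding eq Cs_def \<beta>_def .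
qed

definition ZL :: "real set \<Rightarrow> nat \<Rightarrow> real list set" where
  "ZL Z n = {zs. length zs = n \<and> set zs \<subseteq> Z}"

definition tj :: "('s \<times> 'a) list \<Rightarrow> real list \<Rightarrow> ('s \<times> 'a \<times> real) list" where
  "tj x z = map (\<lambda>(p,r). (fst p, snd p, r)) (zip x z)"

lemma finite_ZL: "finite Z \<Longrightarrow> finite (ZL Z n)"
  unfolding ZL_def using finite_lists_length_eq[of Z n] by (simp add: conj_commute)

lemma ZL_0: "ZL Z 0 = {[]}" unfolding ZL_def by auto

lemma sum_ZL_Suc:
  assumes "finite Z"
  shows "(\<Sum>zs\<in>ZL Z (Suc n). g zs) = (\<Sum>zs\<in>ZL Z n. \<Sum>r\<in>Z. g (zs @ [r]))"
proof -
  have img: "ZL Z (Suc n) = (\<lambda>(zs,r). zs @ [r]) ` (ZL Z n \<times> Z)"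
  proof
    show "ZL Z (Suc n) \<subseteq> (\<lambda>(zs,r). zs @ [r]) ` (ZL Z n \<times> Z)"
    proof
      fix zs assume "zs \<in> ZL Z (Suc n)"
      then have zs: "length zs = Suc n" "set zs \<subseteq> Z" unfolding ZL_def by auto
      then obtain ys r where "zs = ys @ [r]" by (metis length_Suc_conv_rev)
      with zs show "zs \<in> (\<lambda>(zs,r). zs @ [r]) ` (ZL Z n \<times> Z)"
        unfolding ZL_def by (auto intro!: image_eqI[of _ _ "(ys, r)"])
    qed
  qed (auto simp: ZL_def)
  have inj: "inj_on (\<lambda>(zs,r). zs @ [r]) (ZL Z n \<times> Z)"
    by (rule inj_onI) auto
  have "(\<Sum>zs\<in>ZL Z (Suc n). g zs) = (\<Sum>q\<in>ZL Z n \<times> Z. g (fst q @ [snd q]))"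
    unfolding img by (subst sum.reindex[OF inj]) (simp add: case_prod_beta)
  also have "\<dots> = (\<Sum>(zs,r)\<in>ZL Z n \<times> Z. g (zs @ [r]))"
    by (simp add: case_prod_beta)
  also have "\<dots> = (\<Sum>zs\<in>ZL Z n. \<Sum>r\<in>Z. g (zs @ [r]))"
    by (rule sum.cartesian_product[symmetric])
  finally show ?thesis .
qed

lemma sum_prod_ZL:
  fixes g :: "nat \<Rightarrow> real \<Rightarrow> real"
  assumes "finite Z"
  shows "(\<Sum>zs\<in>ZL Z n. \<Prod>i<n. g i (zs ! i)) = (\<Prod>i<n. \<Sum>r\<in>Z. g i r)"
proof (induction n)
  case 0
  then show ?case by (simp add: ZL_0)
next
  case (Suc n)
  have "(\<Sum>zs\<in>ZL Z (Suc n). \<Prod>i<Suc n. g i (zs ! i))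
      = (\<Sum>zs\<in>ZL Z n. \<Sum>r\<in>Z. \<Prod>i<Suc n. g i ((zs @ [r]) ! i))"
    by (rule sum_ZL_Suc[OF assms])
  also have "\<dots> = (\<Sum>zs\<in>ZL Z n. \<Sum>r\<in>Z. (\<Prod>i<n. g i (zs ! i)) * g n r)"
  proof (intro sum.cong refl)
    fix zs r assume "zs \<in> ZL Z n"
    then have l: "length zs = n" unfolding ZL_def by auto
    have "(\<Prod>i<n. g i ((zs @ [r]) ! i)) = (\<Prod>i<n. g i (zs ! i))"
      by (rule prod.cong) (auto simp: nth_append l)
    then show "(\<Prod>i<Suc n. g i ((zs @ [r]) ! i)) = (\<Prod>i<n. g i (zs ! i)) * g n r"
      by (simp add: l nth_append)
  qed
  also have "\<dots> = (\<Sum>zs\<in>ZL Z n. \<Prod>i<n. g i (zs ! i)) * (\<Sum>r\<in>Z. g n r)"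
    by (rule sum_product[symmetric])
  finally show ?case using Suc by simp
qed

lemma length_tj[simp]: "length (tj x z) = min (length x) (length z)"
  unfolding tj_def by simp

lemma nth_tj: "t < length x \<Longrightarrow> t < length z \<Longrightarrow> tj x z ! t = (fst (x!t), snd (x!t), z!t)"
  unfolding tj_def by simp

lemma take_tj: "take t (tj x z) = tj (take t x) (take t z)"
  unfolding tj_def by (simp add: take_map take_zip)

lemma sa_part_tj: "length x = length z \<Longrightarrow> sa_part (tj x z) = x"
  unfolding tj_def sa_part_def
  by (induction x z rule: list_induct2) auto

lemma tj_snoc: "length x = length z \<Longrightarrow> tj (x @ [p]) (z @ [r]) = tj x z @ [(fst p, snd p, r)]"
  unfolding tj_def by simp

definition Pol :: "(('s \<times> 'a \<times> real) list \<Rightarrow> 's \<Rightarrow> 'a \<Rightarrow> real) \<Rightarrow> ('s \<times> 'a) list \<Rightarrow> real list \<Rightarrow> real" where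
  "Pol \<pi> x z = (\<Prod>t<length x. \<pi> (take t (tj x z)) (fst (x!t)) (snd (x!t)))"

definition Base :: "('s \<Rightarrow> 'a \<Rightarrow> 's \<Rightarrow> real) \<Rightarrow> ('s \<Rightarrow> real) \<Rightarrow> ('s \<times> 'a) list \<Rightarrow> real" where
  "Base T \<nu> x = \<nu> (fst (x!0)) * (\<Prod>t<length x - 1. T (fst (x!t)) (snd (x!t)) (fst (x!Suc t)))"

lemma traj_prob_tj:
  assumes "length z = length x" "x \<noteq> []"
  shows "traj_prob T \<nu> M w \<mu> \<pi> (tj x z) = Base T \<nu> x * Pol \<pi> x z * moment M w \<mu> x z"
proof -
  have n: "\<And>t. t < length x \<Longrightarrow> tj x z ! t = (fst (x!t), snd (x!t), z!t)"
    using assms by (simp add: nth_tj)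
  have 1: "(\<Prod>t<length x - 1. T (fst (tj x z ! t)) (fst (snd (tj x z ! t))) (fst (tj x z ! Suc t)))
        = (\<Prod>t<length x - 1. T (fst (x!t)) (snd (x!t)) (fst (x!Suc t)))"
    by (rule prod.cong) (auto simp: n)
  have 2: "(\<Prod>t<length x. \<pi> (take t (tj x z)) (fst (tj x z ! t)) (fst (snd (tj x z ! t))))
        = Pol \<pi> x z"
    unfolding Pol_def by (rule prod.cong) (auto simp: n)
  have 3: "(\<Sum>m<M. w m * (\<Prod>t<length x. \<mu> m (fst (tj x z ! t)) (fst (snd (tj x z ! t))) (snd (snd (tj x z ! t)))))
        = moment M w \<mu> x z"
    unfolding moment_def by (intro sum.cong refl arg_cong2[where f="(*)"] prod.cong) (auto simp: n)
  have 0: "\<nu> (fst (tj x z ! 0)) = \<nu> (fst (x!0))"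
    using assms by (simp add: nth_tj)
  show ?thesis unfolding traj_prob_def Let_def Base_def using assms 0 1 2 3 by simp
qed

lemma Pol_snoc:
  assumes "length z = length x"
  shows "Pol \<pi> (x @ [p]) (z @ [r]) = Pol \<pi> x z * \<pi> (tj x z) (fst p) (snd p)"
proof -
  have "(\<Prod>t<length x. \<pi> (take t (tj (x @ [p]) (z @ [r]))) (fst ((x @ [p])!t)) (snd ((x @ [p])!t)))
      = Pol \<pi> x z"
    unfolding Pol_def using assms by (intro prod.cong refl) (auto simp: tj_snoc nth_append)
  moreover have "take (length x) (tj (x @ [p]) (z @ [r])) = tj x z"
    using assms by (simp add: tj_snoc)
  ultimately show ?thesis unfolding Pol_def by simp
qed

definition Wf :: "real set \<Rightarrow> (nat \<Rightarrow> 's \<times> 'a \<Rightarrow> real \<Rightarrow> real) \<Rightarrow> (('s \<times> 'a \<times> real) list \<Rightarrow> 's \<Rightarrow> 'a \<Rightarrow> real)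
   \<Rightarrow> ('s \<times> 'a) list \<Rightarrow> real" where
  "Wf Z f \<pi> y = (\<Sum>z\<in>ZL Z (length y). (\<Prod>j<length y. f j (y!j) (z!j)) * Pol \<pi> y z)"

definition goodf :: "'s set \<Rightarrow> 'a set \<Rightarrow> real set \<Rightarrow> (nat \<Rightarrow> 's \<times> 'a \<Rightarrow> real \<Rightarrow> real) \<Rightarrow> bool" where
  "goodf S A Z f \<longleftrightarrow> (\<forall>j. \<forall>p\<in>S\<times>A. (\<forall>r\<in>Z. f j p r \<ge> 0) \<and> sum (f j p) Z = 1)"

lemma pol_nonneg: "\<pi> \<in> policies S A \<Longrightarrow> s \<in> S \<Longrightarrow> a \<in> A \<Longrightarrow> \<pi> h s a \<ge> 0"
  unfolding policies_def by auto

lemma pol_sum: "\<pi> \<in> policies S A \<Longrightarrow> s \<in> S \<Longrightarrow> (\<Sum>a\<in>A. \<pi> h s a) = 1"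
  unfolding policies_def by auto

lemma Pol_nonneg:
  assumes "\<pi> \<in> policies S A" "set y \<subseteq> S \<times> A"
  shows "Pol \<pi> y z \<ge> 0"
  unfolding Pol_def
proof (rule prod_nonneg)
  fix t assume "t \<in> {..<length y}"
  then have "y!t \<in> S \<times> A" using assms(2) nth_mem by fastforce
  then show "\<pi> (take t (tj y z)) (fst (y!t)) (snd (y!t)) \<ge> 0"
    using pol_nonneg[OF assms(1)] by (cases "y!t") auto
qed

lemma G_nonneg:
  assumes "\<pi> \<in> policies S A" "set y \<subseteq> S \<times> A" "goodf S A Z f" "z \<in> ZL Z (length y)"
  shows "(\<Prod>j<length y. f j (y!j) (z!j)) * Pol \<pi> y z \<ge> 0"
proof -
  have "(\<Prod>j<length y. f j (y!j) (z!j)) \<ge> 0"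
  proof (rule prod_nonneg)
    fix j assume "j \<in> {..<length y}"
    then have "y!j \<in> S \<times> A" "z!j \<in> Z" using assms(2,4) nth_mem unfolding ZL_def by fastforce+
    then show "f j (y!j) (z!j) \<ge> 0" using assms(3) unfolding goodf_def by fastforce
  qed
  then show ?thesis using Pol_nonneg[OF assms(1,2)] by simp
qed

lemma Wf_nonneg:
  assumes "\<pi> \<in> policies S A" "set y \<subseteq> S \<times> A" "goodf S A Z f"
  shows "Wf Z f \<pi> y \<ge> 0"
  unfolding Wf_def using G_nonneg[OF assms] by (intro sum_nonneg) auto

lemma Wf_snoc:
  assumes "finite Z" "goodf S A Z f" "p \<in> S \<times> A"
  shows "Wf Z f \<pi> (y @ [p]) = (\<Sum>z\<in>ZL Z (length y). (\<Prod>j<length y. f j (y!j) (z!j)) * Pol \<pi> y z * \<pi> (tj y z) (fst p) (snd p))"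
proof -
  have "Wf Z f \<pi> (y @ [p]) = (\<Sum>z\<in>ZL Z (length y). \<Sum>r\<in>Z.
      (\<Prod>j<Suc (length y). f j ((y @ [p])!j) ((z @ [r])!j)) * Pol \<pi> (y @ [p]) (z @ [r]))"
    unfolding Wf_def by (simp add: sum_ZL_Suc[OF assms(1)])
  also have "\<dots> = (\<Sum>z\<in>ZL Z (length y). \<Sum>r\<in>Z.
      ((\<Prod>j<length y. f j (y!j) (z!j)) * Pol \<pi> y z * \<pi> (tj y z) (fst p) (snd p)) * f (length y) p r)"
  proof (intro sum.cong refl)
    fix z r assume "z \<in> ZL Z (length y)"
    then have l: "length z = length y" unfolding ZL_def by auto
    have "(\<Prod>j<length y. f j ((y @ [p])!j) ((z @ [r])!j)) = (\<Prod>j<length y. f j (y!j) (z!j))"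
      by (rule prod.cong) (auto simp: nth_append l)
    then show "(\<Prod>j<Suc (length y). f j ((y @ [p])!j) ((z @ [r])!j)) * Pol \<pi> (y @ [p]) (z @ [r])
       = ((\<Prod>j<length y. f j (y!j) (z!j)) * Pol \<pi> y z * \<pi> (tj y z) (fst p) (snd p)) * f (length y) p r"
      by (simp add: nth_append l Pol_snoc)
  qed
  also have "\<dots> = (\<Sum>z\<in>ZL Z (length y). (\<Prod>j<length y. f j (y!j) (z!j)) * Pol \<pi> y z * \<pi> (tj y z) (fst p) (snd p))"
  proof (rule sum.cong[OF refl])
    fix z
    have "sum (f (length y) p) Z = 1" using assms(2,3) unfolding goodf_def by blast
    then show "(\<Sum>r\<in>Z. ((\<Prod>j<length y. f j (y!j) (z!j)) * Pol \<pi> y z * \<pi> (tj y z) (fst p) (snd p)) * f (length y) p r)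
      = (\<Prod>j<length y. f j (y!j) (z!j)) * Pol \<pi> y z * \<pi> (tj y z) (fst p) (snd p)"
      by (simp add: sum_distrib_left[symmetric])
  qed
  finally show ?thesis .
qed

definition sim :: "'s set \<Rightarrow> 'a set \<Rightarrow> real set \<Rightarrow> (nat \<Rightarrow> 's \<times> 'a \<Rightarrow> real \<Rightarrow> real)
   \<Rightarrow> (('s \<times> 'a \<times> real) list \<Rightarrow> 's \<Rightarrow> 'a \<Rightarrow> real) \<Rightarrow> ('s \<times> 'a \<times> real) list \<Rightarrow> 's \<Rightarrow> 'a \<Rightarrow> real" where
  "sim S A Z f \<pi> h s a = (if set (sa_part h) \<subseteq> S \<times> A \<and> Wf Z f \<pi> (sa_part h) \<noteq> 0
      then Wf Z f \<pi> (sa_part h @ [(s,a)]) / Wf Z f \<pi> (sa_part h) else 1 / real (card A))"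

lemma sim_policy:
  fixes S :: "'s set" and A :: "'a set"
  assumes "finite Z" "finite A" "A \<noteq> {}" "goodf S A Z f" "\<pi> \<in> policies S A"
  shows "sim S A Z f \<pi> \<in> policies S A"
  unfolding policies_def
proof (rule CollectI, rule allI, rule ballI, rule conjI)
  fix h :: "('s \<times> 'a \<times> real) list" and s :: 's assume s: "s \<in> S"
  define y where "y = sa_part h"
  show "\<forall>a\<in>A. sim S A Z f \<pi> h s a \<ge> 0"
  proof
    fix a assume a: "a \<in> A"
    show "sim S A Z f \<pi> h s a \<ge> 0"
    proof (cases "set y \<subseteq> S \<times> A \<and> Wf Z f \<pi> y \<noteq> 0")
      case True
      then have "set (y @ [(s,a)]) \<subseteq> S \<times> A" using s a by auto
      then show ?thesis unfolding sim_def y_def[symmetric] using True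
        Wf_nonneg[OF assms(5) _ assms(4)] by (simp add: divide_nonneg_nonneg)
    qed (simp add: sim_def y_def[symmetric])
  qed
  show "(\<Sum>a\<in>A. sim S A Z f \<pi> h s a) = 1"
  proof (cases "set y \<subseteq> S \<times> A \<and> Wf Z f \<pi> y \<noteq> 0")
    case True
    have "(\<Sum>a\<in>A. Wf Z f \<pi> (y @ [(s,a)])) = (\<Sum>a\<in>A. \<Sum>z\<in>ZL Z (length y).
        (\<Prod>j<length y. f j (y!j) (z!j)) * Pol \<pi> y z * \<pi> (tj y z) s a)"
      using Wf_snoc[OF assms(1,4)] s by (intro sum.cong refl) auto
    also have "\<dots> = (\<Sum>z\<in>ZL Z (length y). (\<Prod>j<length y. f j (y!j) (z!j)) * Pol \<pi> y z * (\<Sum>a\<in>A. \<pi> (tj y z) s a))"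
      by (simp add: sum.swap[of _ A] sum_distrib_left)
    also have "\<dots> = Wf Z f \<pi> y" unfolding Wf_def using pol_sum[OF assms(5) s] by simp
    finally show ?thesis using True unfolding sim_def y_def[symmetric]
      by (simp add: sum_divide_distrib[symmetric])
  next
    case False
    then have "(\<Sum>a\<in>A. sim S A Z f \<pi> h s a) = (\<Sum>a\<in>A. 1 / real (card A))"
      unfolding sim_def y_def[symmetric] using False by (intro sum.cong refl) auto
    then show ?thesis using assms(2,3) by simp
  qed
qed

lemma sim_telescope:
  assumes "finite Z" "goodf S A Z f" "\<pi> \<in> policies S A" "set x \<subseteq> S \<times> A" "length z = length x" "n \<le> length x"
  shows "(\<Prod>t<n. sim S A Z f \<pi> (take t (tj x z)) (fst (x!t)) (snd (x!t))) = Wf Z f \<pi> (take n x)"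
  using assms(6)
proof (induction n)
  case 0
  then show ?case unfolding Wf_def by (simp add: ZL_0 Pol_def)
next
  case (Suc n)
  have nl: "n < length x" using Suc by simp
  define y where "y = take n x"
  have sa: "sa_part (take n (tj x z)) = y"
    unfolding take_tj y_def using assms(5) by (simp add: sa_part_tj)
  have ysub: "set y \<subseteq> S \<times> A" using assms(4) unfolding y_def by (meson order_trans set_take_subset)
  have p: "x!n \<in> S \<times> A" using assms(4) nl nth_mem by blast
  have tk: "take (Suc n) x = y @ [x!n]" unfolding y_def using nl by (simp add: take_Suc_conv_app_nth)
  have IH: "(\<Prod>t<n. sim S A Z f \<pi> (take t (tj x z)) (fst (x!t)) (snd (x!t))) = Wf Z f \<pi> y"
    using Suc y_def by simp
  show ?case
  proof (cases "Wf Z f \<pi> y = 0")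
    case False
    then show ?thesis using IH ysub unfolding tk by (simp add: sim_def sa)
  next
    case True
    have G0: "(\<Prod>j<length y. f j (y!j) (z'!j)) * Pol \<pi> y z' = 0" if "z' \<in> ZL Z (length y)" for z'
    proof -
      have "\<forall>z'\<in>ZL Z (length y). (\<Prod>j<length y. f j (y!j) (z'!j)) * Pol \<pi> y z' = 0"
        using True unfolding Wf_def
        by (subst sum_nonneg_eq_0_iff[symmetric]) (auto simp: finite_ZL[OF assms(1)] intro: G_nonneg[OF assms(3) ysub assms(2)])
      then show ?thesis using that by blast
    qed
    have "Wf Z f \<pi> (y @ [x!n]) = 0" unfolding Wf_snoc[OF assms(1,2) p]
    proof (rule sum.neutral, rule ballI)
      fix z' assume "z' \<in> ZL Z (length y)"
      from G0[OF this] show "(\<Prod>j<length y. f j (y!j) (z'!j)) * Pol \<pi> y z' * \<pi> (tj y z') (fst (x!n)) (snd (x!n)) = 0"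
        by simp
    qed
    then show ?thesis using IH True unfolding tk by simp
  qed
qed

lemma Pol_sim:
  assumes "finite Z" "goodf S A Z f" "\<pi> \<in> policies S A" "set x \<subseteq> S \<times> A" "length z = length x"
  shows "Pol (sim S A Z f \<pi>) x z = Wf Z f \<pi> x"
  using sim_telescope[OF assms le_refl] unfolding Pol_def by simp

lemma le1_of_sum:
  fixes g :: "'b \<Rightarrow> real"
  assumes "finite X" "\<forall>y\<in>X. g y \<ge> 0" "sum g X = 1" "y \<in> X"
  shows "g y \<le> 1"
  using member_le_sum[of y X g] assms by auto

lemma rw_tj: "length x = length z \<Longrightarrow> map (\<lambda>q. snd (snd q)) (tj x z) = z"
  unfolding tj_def by (induction x z rule: list_induct2) auto

lemma tj_rw: "tj (sa_part \<tau>) (map (\<lambda>q. snd (snd q)) \<tau>) = \<tau>"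
  unfolding tj_def sa_part_def by (induction \<tau>) auto

lemma set_tj: "set x \<subseteq> S \<times> A \<Longrightarrow> set z \<subseteq> Z \<Longrightarrow> set (tj x z) \<subseteq> S \<times> A \<times> Z"
proof
  fix q assume "set x \<subseteq> S \<times> A" "set z \<subseteq> Z" "q \<in> set (tj x z)"
  then obtain p r where pr: "(p,r) \<in> set (zip x z)" "q = (fst p, snd p, r)" unfolding tj_def by auto
  then have "p \<in> set x" "r \<in> set z" by (auto dest: set_zip_leftD set_zip_rightD)
  then show "q \<in> S \<times> A \<times> Z" using pr \<open>set x \<subseteq> S \<times> A\<close> \<open>set z \<subseteq> Z\<close> by (cases p) auto
qed

lemma traj_sum:
  fixes g :: "('s \<times> 'a \<times> real) list \<Rightarrow> real"
  assumes E: "E \<subseteq> {x. length x = H \<and> set x \<subseteq> S \<times> A}"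
  shows "(\<Sum>\<tau>\<in>{\<tau>\<in>trajs S A Z H. sa_part \<tau> \<in> E}. g \<tau>) = (\<Sum>x\<in>E. \<Sum>z\<in>ZL Z H. g (tj x z))"
proof -
  have img: "{\<tau>\<in>trajs S A Z H. sa_part \<tau> \<in> E} = (\<lambda>(x,z). tj x z) ` (E \<times> ZL Z H)"
  proof
    show "{\<tau>\<in>trajs S A Z H. sa_part \<tau> \<in> E} \<subseteq> (\<lambda>(x,z). tj x z) ` (E \<times> ZL Z H)"
    proof
      fix \<tau> assume t: "\<tau> \<in> {\<tau>\<in>trajs S A Z H. sa_part \<tau> \<in> E}"
      have "map (\<lambda>q. snd (snd q)) \<tau> \<in> ZL Z H"
        using t unfolding trajs_def ZL_def by auto
      then show "\<tau> \<in> (\<lambda>(x,z). tj x z) ` (E \<times> ZL Z H)"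
        using t tj_rw[of \<tau>] by (auto intro!: image_eqI[of _ _ "(sa_part \<tau>, map (\<lambda>q. snd (snd q)) \<tau>)"])
    qed
  next
    show "(\<lambda>(x,z). tj x z) ` (E \<times> ZL Z H) \<subseteq> {\<tau>\<in>trajs S A Z H. sa_part \<tau> \<in> E}"
    proof
      fix \<tau> assume "\<tau> \<in> (\<lambda>(x,z). tj x z) ` (E \<times> ZL Z H)"
      then obtain x z where xz: "x \<in> E" "z \<in> ZL Z H" "\<tau> = tj x z" by auto
      then have l: "length x = H" "length z = H" "set x \<subseteq> S \<times> A" "set z \<subseteq> Z"
        using E unfolding ZL_def by auto
      show "\<tau> \<in> {\<tau>\<in>trajs S A Z H. sa_part \<tau> \<in> E}"
        unfolding trajs_def using xz l set_tj[OF l(3,4)] sa_part_tj[of x z] by auto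
    qed
  qed
  have inj: "inj_on (\<lambda>(x,z). tj x z) (E \<times> ZL Z H)"
  proof (rule inj_onI, clarify)
    fix x z x' z' assume a: "x \<in> E" "z \<in> ZL Z H" "x' \<in> E" "z' \<in> ZL Z H" "tj x z = tj x' z'"
    then have l: "length x = length z" "length x' = length z'" using E unfolding ZL_def by auto
    show "x = x' \<and> z = z'"
      using sa_part_tj[OF l(1)] sa_part_tj[OF l(2)] rw_tj[OF l(1)] rw_tj[OF l(2)] a(5) by metis
  qed
  have "(\<Sum>\<tau>\<in>{\<tau>\<in>trajs S A Z H. sa_part \<tau> \<in> E}. g \<tau>) = (\<Sum>q\<in>E \<times> ZL Z H. g (tj (fst q) (snd q)))"
    unfolding img by (subst sum.reindex[OF inj]) (simp add: case_prod_beta)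
  also have "\<dots> = (\<Sum>(x,z)\<in>E \<times> ZL Z H. g (tj x z))" by (simp add: case_prod_beta)
  also have "\<dots> = (\<Sum>x\<in>E. \<Sum>z\<in>ZL Z H. g (tj x z))" by (rule sum.cartesian_product[symmetric])
  finally show ?thesis .
qed

lemma moment_sum1:
  assumes "rmmdp S A Z T \<nu> M w \<mu>" "length x = H" "set x \<subseteq> S \<times> A"
  shows "(\<Sum>z\<in>ZL Z H. moment M w \<mu> x z) = 1"
proof -
  have fZ: "finite Z" using assms(1) unfolding rmmdp_def by auto
  have "(\<Sum>z\<in>ZL Z H. moment M w \<mu> x z) = (\<Sum>m<M. w m * (\<Sum>z\<in>ZL Z H. \<Prod>i<H. \<mu> m (fst (x!i)) (snd (x!i)) (z!i)))"
    unfolding moment_def assms(2) by (simp add: sum.swap[of _ "ZL Z H"] sum_distrib_left)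
  also have "\<dots> = (\<Sum>m<M. w m * (\<Prod>i<H. \<Sum>r\<in>Z. \<mu> m (fst (x!i)) (snd (x!i)) r))"
  proof (intro sum.cong refl)
    fix m show "w m * (\<Sum>z\<in>ZL Z H. \<Prod>i<H. \<mu> m (fst (x!i)) (snd (x!i)) (z!i)) = w m * (\<Prod>i<H. \<Sum>r\<in>Z. \<mu> m (fst (x!i)) (snd (x!i)) r)"
      using sum_prod_ZL[OF fZ, of "\<lambda>i r. \<mu> m (fst (x!i)) (snd (x!i)) r" H] by simp
  qed
  also have "\<dots> = (\<Sum>m<M. w m)"
  proof (intro sum.cong refl)
    fix m assume m: "m \<in> {..<M}"
    have "(\<Prod>i<H. \<Sum>r\<in>Z. \<mu> m (fst (x!i)) (snd (x!i)) r) = (\<Prod>i<H. 1)"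
    proof (rule prod.cong[OF refl])
      fix i assume "i \<in> {..<H}"
      then have "x!i \<in> S \<times> A" using assms(2,3) nth_mem by fastforce
      then show "(\<Sum>r\<in>Z. \<mu> m (fst (x!i)) (snd (x!i)) r) = 1"
        using assms(1) m unfolding rmmdp_def by (cases "x!i") auto
    qed
    then show "w m * (\<Prod>i<H. \<Sum>r\<in>Z. \<mu> m (fst (x!i)) (snd (x!i)) r) = w m" by simp
  qed
  also have "\<dots> = 1" using assms(1) unfolding rmmdp_def by auto
  finally show ?thesis .
qed

lemma event_prob_tj:
  assumes "E \<subseteq> {x. length x = H \<and> set x \<subseteq> S \<times> A}" "H > 0"
  shows "event_prob S A Z H T \<nu> M w \<mu> \<pi> E = (\<Sum>x\<in>E. \<Sum>z\<in>ZL Z H. Base T \<nu> x * Pol \<pi> x z * moment M w \<mu> x z)"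
proof -
  have "event_prob S A Z H T \<nu> M w \<mu> \<pi> E = (\<Sum>x\<in>E. \<Sum>z\<in>ZL Z H. traj_prob T \<nu> M w \<mu> \<pi> (tj x z))"
    unfolding event_prob_def by (rule traj_sum[OF assms(1)])
  also have "\<dots> = (\<Sum>x\<in>E. \<Sum>z\<in>ZL Z H. Base T \<nu> x * Pol \<pi> x z * moment M w \<mu> x z)"
  proof (intro sum.cong refl)
    fix x z assume "x \<in> E" "z \<in> ZL Z H"
    then have "length z = length x" "x \<noteq> []" using assms unfolding ZL_def by auto
    then show "traj_prob T \<nu> M w \<mu> \<pi> (tj x z) = Base T \<nu> x * Pol \<pi> x z * moment M w \<mu> x z"
      by (rule traj_prob_tj)
  qed
  finally show ?thesis .
qed

lemma event_prob_sim:
  assumes "E \<subseteq> {x. length x = H \<and> set x \<subseteq> S \<times> A}" "H > 0" "rmmdp S A Z T \<nu> M w \<mu>"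
    "goodf S A Z f" "\<pi> \<in> policies S A"
  shows "event_prob S A Z H T \<nu> M w \<mu> (sim S A Z f \<pi>) E = (\<Sum>x\<in>E. Base T \<nu> x * Wf Z f \<pi> x)"
proof -
  have fZ: "finite Z" using assms(3) unfolding rmmdp_def by auto
  show ?thesis unfolding event_prob_tj[OF assms(1,2)]
  proof (intro sum.cong refl)
    fix x assume x: "x \<in> E"
    then have l: "length x = H" "set x \<subseteq> S \<times> A" using assms(1) by auto
    have "(\<Sum>z\<in>ZL Z H. Base T \<nu> x * Pol (sim S A Z f \<pi>) x z * moment M w \<mu> x z)
        = (\<Sum>z\<in>ZL Z H. Base T \<nu> x * Wf Z f \<pi> x * moment M w \<mu> x z)"
    proof (intro sum.cong refl)
      fix z assume "z \<in> ZL Z H"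
      then have "length z = length x" using l unfolding ZL_def by auto
      then show "Base T \<nu> x * Pol (sim S A Z f \<pi>) x z * moment M w \<mu> x z = Base T \<nu> x * Wf Z f \<pi> x * moment M w \<mu> x z"
        using Pol_sim[OF fZ assms(4,5) l(2)] by simp
    qed
    also have "\<dots> = Base T \<nu> x * Wf Z f \<pi> x" 
      using moment_sum1[OF assms(3) l] by (simp add: sum_distrib_left[symmetric])
    finally show "(\<Sum>z\<in>ZL Z H. Base T \<nu> x * Pol (sim S A Z f \<pi>) x z * moment M w \<mu> x z) = Base T \<nu> x * Wf Z f \<pi> x" .
  qed
qed

lemma length_nths_eq: "length x = length z \<Longrightarrow> length (nths x J) = length (nths z J)"
  by (simp add: length_nths)

lemma prod_nths:
  fixes G :: "'x \<Rightarrow> 'y \<Rightarrow> real"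
  assumes "length x = length z"
  shows "(\<Prod>i<length (nths x J). G (nths x J ! i) (nths z J ! i)) = (\<Prod>t\<in>{t. t < length x \<and> t \<in> J}. G (x!t) (z!t))"
  using assms
proof (induction x z arbitrary: J rule: list_induct2)
  case Nil
  then show ?case by simp
next
  case (Cons a x' b z' J)
  define J' where "J' = {j. Suc j \<in> J}"
  have IH: "(\<Prod>i<length (nths x' J'). G (nths x' J' ! i) (nths z' J' ! i)) = (\<Prod>t\<in>{t. t < length x' \<and> t \<in> J'}. G (x'!t) (z'!t))"
    by (rule Cons.IH)
  have ln: "length (nths x' J') = length (nths z' J')" using length_nths_eq[OF Cons.hyps] .
  have R: "(\<Prod>t\<in>Suc ` {t. t < length x' \<and> t \<in> J'}. G ((a#x')!t) ((b#z')!t)) = (\<Prod>t\<in>{t. t < length x' \<and> t \<in> J'}. G (x'!t) (z'!t))"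
    by (subst prod.reindex) auto
  show ?case
  proof (cases "0 \<in> J")
    case True
    have set: "{t. t < length (a#x') \<and> t \<in> J} = insert 0 (Suc ` {t. t < length x' \<and> t \<in> J'})"
      using True unfolding J'_def by (auto simp: gr0_conv_Suc) (metis Suc_less_eq gr0_implies_Suc image_iff mem_Collect_eq neq0_conv)
    have nx: "nths (a#x') J = a # nths x' J'" "nths (b#z') J = b # nths z' J'"
      using True unfolding J'_def by (simp_all add: nths_Cons)
    have "(\<Prod>i<length (nths (a#x') J). G (nths (a#x') J ! i) (nths (b#z') J ! i))
        = G a b * (\<Prod>i<length (nths x' J'). G (nths x' J' ! i) (nths z' J' ! i))"
      unfolding nx by (simp add: prod.lessThan_Suc_shift ln del: prod.lessThan_Suc)
    also have "\<dots> = (\<Prod>t\<in>{t. t < length (a#x') \<and> t \<in> J}. G ((a#x')!t) ((b#z')!t))"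
      unfolding set IH R[symmetric] by (subst prod.insert) auto
    finally show ?thesis .
  next
    case False
    have set: "{t. t < length (a#x') \<and> t \<in> J} = Suc ` {t. t < length x' \<and> t \<in> J'}"
      using False unfolding J'_def by (auto simp: gr0_conv_Suc) (metis Suc_less_eq gr0_implies_Suc image_iff mem_Collect_eq neq0_conv)
    have nx: "nths (a#x') J = nths x' J'" "nths (b#z') J = nths z' J'"
      using False unfolding J'_def by (simp_all add: nths_Cons)
    show ?thesis unfolding nx set R IH ..
  qed
qed

lemma moment_nths:
  assumes "length z = length x"
  shows "moment M w \<mu> (nths x J) (nths z J) = (\<Sum>m<M. w m * (\<Prod>t\<in>{t. t < length x \<and> t \<in> J}. \<mu> m (fst (x!t)) (snd (x!t)) (z!t)))"
  unfolding moment_def using prod_nths[of x z "\<lambda>p r. \<mu> _ (fst p) (snd p) r" J] assms by simp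

lemma nths_cnt:
  assumes "finite P" "J \<subseteq> P"
  shows "nths (nths l P) (cnt P ` J) = nths l J"
proof -
  have "{i \<in> P. \<exists>j \<in> cnt P ` J. card {i' \<in> P. i' < i} = j} = J"
  proof
    show "{i \<in> P. \<exists>j \<in> cnt P ` J. card {i' \<in> P. i' < i} = j} \<subseteq> J"
    proof
      fix i assume "i \<in> {i \<in> P. \<exists>j \<in> cnt P ` J. card {i' \<in> P. i' < i} = j}"
      then obtain j where "i \<in> P" "j \<in> J" "cnt P i = cnt P j" unfolding cnt_def by auto
      then show "i \<in> J" using cnt_inj[OF assms(1)] assms(2) unfolding inj_on_def by blast
    qed
  next
    show "J \<subseteq> {i \<in> P. \<exists>j \<in> cnt P ` J. card {i' \<in> P. i' < i} = j}"
      using assms(2) unfolding cnt_def by blast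
  qed
  then show ?thesis by (simp add: nths_nths)
qed

lemma XsetD:
  assumes "xs \<in> Xset S A Z d \<delta> M1 w1 \<mu>1 M2 w2 \<mu>2" "length zs = d" "set zs \<subseteq> Z" "I \<subseteq> {..<d}"
  shows "\<bar>moment M1 w1 \<mu>1 (nths xs I) (nths zs I) - moment M2 w2 \<mu>2 (nths xs I) (nths zs I)\<bar> \<le> \<delta>"
proof -
  have "\<forall>zs. length zs = d \<and> set zs \<subseteq> Z \<longrightarrow>
           (\<forall>I\<subseteq>{..<d}. \<bar>moment M1 w1 \<mu>1 (nths xs I) (nths zs I)
                          - moment M2 w2 \<mu>2 (nths xs I) (nths zs I)\<bar> \<le> \<delta>)"
    using assms(1) unfolding Xset_def mem_Collect_eq by (elim conjE)
  then show ?thesis using assms(2-4) by blast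
qed

lemma EtotD:
  assumes "xs \<in> Etot S A H d X"
  shows "length xs = H" "set xs \<subseteq> S \<times> A" "P \<subseteq> {..<H} \<Longrightarrow> card P = d \<Longrightarrow> nths xs P \<in> X"
  using assms unfolding Etot_def mem_Collect_eq by blast+

lemma etot_small:
  assumes x: "x \<in> Etot S A H d (Xset S A Z d \<delta> M1 w1 \<mu>1 M2 w2 \<mu>2)" and dH: "d \<le> H"
    and J: "J \<subseteq> {..<H}" "card J \<le> d" and z: "z \<in> ZL Z H"
  shows "\<bar>moment M1 w1 \<mu>1 (nths x J) (nths z J) - moment M2 w2 \<mu>2 (nths x J) (nths z J)\<bar> \<le> \<delta>"
proof -
  have fJ: "finite J" using J(1) finite_subset by blast
  have cd: "d - card J \<le> card ({..<H} - J)" using J dH fJ card_Diff_subset[OF fJ J(1)] by simp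
  obtain T where T: "T \<subseteq> {..<H} - J" "card T = d - card J" "finite T"
    using obtain_subset_with_card_n[OF cd] by blast
  define P where "P = J \<union> T"
  have P: "P \<subseteq> {..<H}" "finite P" "J \<subseteq> P" unfolding P_def using T J fJ by auto
  have dj: "J \<inter> T = {}" using T by blast
  have cP: "card P = d" unfolding P_def using card_Un_disjoint[OF fJ T(3) dj] T(2) J(2) by simp
  have zl: "length z = H" "set z \<subseteq> Z" using z unfolding ZL_def by auto
  have X: "nths x P \<in> Xset S A Z d \<delta> M1 w1 \<mu>1 M2 w2 \<mu>2" using EtotD(3)[OF x P(1) cP] .
  have lz: "length (nths z P) = d"
  proof -
    have "{i. i < length z \<and> i \<in> P} = P" using P(1) zl(1) by auto
    then show ?thesis using cP by (simp add: length_nths)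
  qed
  have sz: "set (nths z P) \<subseteq> Z" using order_trans[OF set_nths_subset zl(2)] .
  have I: "cnt P ` J \<subseteq> {..<d}"
  proof
    fix j assume "j \<in> cnt P ` J"
    then obtain t where t: "t \<in> J" "j = cnt P t" by blast
    then show "j \<in> {..<d}" using cnt_less[OF P(2), of t] P(3) cP by auto
  qed
  have "\<bar>moment M1 w1 \<mu>1 (nths (nths x P) (cnt P ` J)) (nths (nths z P) (cnt P ` J))
        - moment M2 w2 \<mu>2 (nths (nths x P) (cnt P ` J)) (nths (nths z P) (cnt P ` J))\<bar> \<le> \<delta>"
    by (rule XsetD[OF X lz sz I])
  then show ?thesis unfolding nths_cnt[OF P(2,3)] .
qed

definition kap :: "nat \<Rightarrow> nat \<Rightarrow> nat + nat" where
  "kap M1 j = (if j < M1 then Inl j else Inr (j - M1))"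

definition Ks :: "nat \<Rightarrow> nat \<Rightarrow> (nat + nat) set" where
  "Ks M1 M2 = Inl ` {..<M1} \<union> Inr ` {..<M2}"

definition cw :: "(nat \<Rightarrow> real) \<Rightarrow> (nat \<Rightarrow> real) \<Rightarrow> nat + nat \<Rightarrow> real" where
  "cw w1 w2 k = (case k of Inl m \<Rightarrow> w1 m | Inr m \<Rightarrow> - w2 m)"

definition av :: "(nat \<Rightarrow> 's \<Rightarrow> 'a \<Rightarrow> real \<Rightarrow> real) \<Rightarrow> (nat \<Rightarrow> 's \<Rightarrow> 'a \<Rightarrow> real \<Rightarrow> real) \<Rightarrow> nat + nat \<Rightarrow> 's \<times> 'a \<Rightarrow> real \<Rightarrow> real" where
  "av \<mu>1 \<mu>2 k p r = (case k of Inl m \<Rightarrow> \<mu>1 m (fst p) (snd p) r | Inr m \<Rightarrow> \<mu>2 m (fst p) (snd p) r)"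

lemma ks_sum:
  "(\<Sum>k\<in>Ks M1 M2. cw w1 w2 k * F k) = (\<Sum>m<M1. w1 m * F (Inl m)) - (\<Sum>m<M2. w2 m * F (Inr m))"
proof -
  have "(\<Sum>k\<in>Ks M1 M2. cw w1 w2 k * F k) = (\<Sum>k\<in>Inl ` {..<M1}. cw w1 w2 k * F k) + (\<Sum>k\<in>Inr ` {..<M2}. cw w1 w2 k * F k)"
    unfolding Ks_def by (rule sum.union_disjoint) auto
  also have "(\<Sum>k\<in>Inl ` {..<M1}. cw w1 w2 k * F k) = (\<Sum>m<M1. w1 m * F (Inl m))"
    by (subst sum.reindex) (auto simp: cw_def)
  also have "(\<Sum>k\<in>Inr ` {..<M2}. cw w1 w2 k * F k) = - (\<Sum>m<M2. w2 m * F (Inr m))"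
    by (subst sum.reindex) (auto simp: cw_def sum_negf)
  finally show ?thesis by simp
qed

lemma kap_Ks: "j < M1 + M2 \<Longrightarrow> kap M1 j \<in> Ks M1 M2"
  unfolding kap_def Ks_def by auto

lemma Ks_kap: "Ks M1 M2 \<subseteq> kap M1 ` {..<M1 + M2}"
proof
  fix k assume "k \<in> Ks M1 M2"
  then show "k \<in> kap M1 ` {..<M1 + M2}"
  proof (cases k)
    case (Inl m)
    then have "m < M1" using \<open>k \<in> Ks M1 M2\<close> unfolding Ks_def by auto
    then show ?thesis using Inl unfolding kap_def by (auto intro!: image_eqI[of _ _ m])
  next
    case (Inr m)
    then have "m < M2" using \<open>k \<in> Ks M1 M2\<close> unfolding Ks_def by auto
    then show ?thesis using Inr unfolding kap_def by (auto intro!: image_eqI[of _ _ "M1 + m"])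
  qed
qed

lemma finite_Ks: "finite (Ks M1 M2)" unfolding Ks_def by auto

lemma av_good:
  assumes "rmmdp S A Z T \<nu> M1 w1 \<mu>1" "rmmdp S A Z T \<nu> M2 w2 \<mu>2" "k \<in> Ks M1 M2" "p \<in> S \<times> A"
  shows "(\<forall>r\<in>Z. av \<mu>1 \<mu>2 k p r \<ge> 0) \<and> sum (av \<mu>1 \<mu>2 k p) Z = 1"
proof (cases k)
  case (Inl m)
  then have "m < M1" using assms(3) unfolding Ks_def by auto
  then show ?thesis using assms(1,4) Inl unfolding rmmdp_def av_def by (cases p) auto
next
  case (Inr m)
  then have "m < M2" using assms(3) unfolding Ks_def by auto
  then show ?thesis using assms(2,4) Inr unfolding rmmdp_def av_def by (cases p) auto
qed

definition fcj :: "real set \<Rightarrow> (nat \<Rightarrow> 's \<Rightarrow> 'a \<Rightarrow> real \<Rightarrow> real) \<Rightarrow> (nat \<Rightarrow> 's \<Rightarrow> 'a \<Rightarrow> real \<Rightarrow> real) \<Rightarrow> nat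
   \<Rightarrow> nat set \<Rightarrow> nat set \<Rightarrow> nat \<Rightarrow> 's \<times> 'a \<Rightarrow> real \<Rightarrow> real" where
  "fcj Z \<mu>1 \<mu>2 M1 C J j p r = (if j \<in> J then 1 / real (card Z) else av \<mu>1 \<mu>2 (kap M1 (cnt C j)) p r)"

lemma fcj_good:
  assumes "rmmdp S A Z T \<nu> M1 w1 \<mu>1" "rmmdp S A Z T \<nu> M2 w2 \<mu>2" "finite C" "card C < M1 + M2"
  shows "goodf S A Z (fcj Z \<mu>1 \<mu>2 M1 C J)"
  unfolding goodf_def
proof (intro allI ballI)
  fix j p assume p: "p \<in> S \<times> A"
  have fZ: "finite Z" "Z \<noteq> {}" using assms(1) unfolding rmmdp_def by auto
  show "(\<forall>r\<in>Z. fcj Z \<mu>1 \<mu>2 M1 C J j p r \<ge> 0) \<and> sum (fcj Z \<mu>1 \<mu>2 M1 C J j p) Z = 1"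
  proof (cases "j \<in> J")
    case True
    then show ?thesis unfolding fcj_def using fZ by simp
  next
    case False
    have "cnt C j < M1 + M2" using cnt_le[OF assms(3), of j] assms(4) by linarith
    then have "kap M1 (cnt C j) \<in> Ks M1 M2" by (rule kap_Ks)
    then show ?thesis unfolding fcj_def using False av_good[OF assms(1,2) _ p] by simp
  qed
qed

lemma per_x:
  assumes rm1: "rmmdp S A Z T \<nu> M1 w1 \<mu>1" and rm2: "rmmdp S A Z T \<nu> M2 w2 \<mu>2"
    and x: "x \<in> Etot S A H (min H (M1+M2-1)) (Xset S A Z (min H (M1+M2-1)) \<delta> M1 w1 \<mu>1 M2 w2 \<mu>2)"
    and polnn: "\<And>z. Pol \<pi> x z \<ge> 0"
  shows "(\<Sum>z\<in>ZL Z H. Pol \<pi> x z * \<bar>moment M1 w1 \<mu>1 x z - moment M2 w2 \<mu>2 x z\<bar>)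
     \<le> \<delta> * (\<Sum>C\<in>{C\<in>Pow {..<H}. card C < M1+M2}. \<Sum>J\<in>Pow C. real (card Z) ^ card J * Wf Z (fcj Z \<mu>1 \<mu>2 M1 C J) \<pi> x)"
proof -
  define d where "d = min H (M1+M2-1)"
  define K where "K = M1 + M2"
  define Cs where "Cs = {C\<in>Pow {..<H}. card C < K}"
  have xl: "length x = H" "set x \<subseteq> S \<times> A" using EtotD[OF x] by auto
  have fZ: "finite Z" "Z \<noteq> {}" using rm1 unfolding rmmdp_def by auto
  then have cZ: "real (card Z) > 0" by (simp add: card_gt_0_iff)
  have xi: "x!t \<in> S \<times> A" if "t < H" for t using xl that nth_mem by blast
  define g where "g C J z = real (card Z) ^ card J * (\<Prod>j<H. fcj Z \<mu>1 \<mu>2 M1 C J j (x!j) (z!j))" for C J z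
  have D: "\<bar>moment M1 w1 \<mu>1 x z - moment M2 w2 \<mu>2 x z\<bar> \<le> \<delta> * (\<Sum>C\<in>Cs. \<Sum>J\<in>Pow C. g C J z)"
    if z: "z \<in> ZL Z H" for z
  proof -
    define v where "v k t = av \<mu>1 \<mu>2 k (x!t) (z!t)" for k t
    have zl: "length z = H" using z unfolding ZL_def by auto
    have zi: "z!t \<in> Z" if "t < H" for t using z that nth_mem unfolding ZL_def by blast
    have eq: "moment M1 w1 \<mu>1 x z - moment M2 w2 \<mu>2 x z = (\<Sum>k\<in>Ks M1 M2. cw w1 w2 k * (\<Prod>s<H. v k s))"
      unfolding ks_sum moment_def v_def av_def xl(1) by simp
    have nn: "\<forall>j<K. \<forall>t<H. v (kap M1 j) t \<ge> 0"
    proof (intro allI impI)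
      fix j t assume "j < K" "t < H"
      then show "v (kap M1 j) t \<ge> 0" unfolding v_def K_def
        using av_good[OF rm1 rm2 kap_Ks xi] zi by blast
    qed
    have small: "\<forall>J\<subseteq>{..<H}. card J < K \<longrightarrow> \<bar>\<Sum>k\<in>Ks M1 M2. cw w1 w2 k * (\<Prod>t\<in>J. v k t)\<bar> \<le> \<delta>"
    proof (intro allI impI)
      fix J assume J: "J \<subseteq> {..<H}" "card J < K"
      have "card J \<le> H" using card_mono[OF _ J(1)] by simp
      then have cJ: "card J \<le> d" using J(2) unfolding d_def K_def by linarith
      have setJ: "{t. t < length x \<and> t \<in> J} = J" using J(1) xl(1) by auto
      have "(\<Sum>k\<in>Ks M1 M2. cw w1 w2 k * (\<Prod>t\<in>J. v k t))
          = moment M1 w1 \<mu>1 (nths x J) (nths z J) - moment M2 w2 \<mu>2 (nths x J) (nths z J)"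
        unfolding ks_sum moment_nths[of z x, OF zl[folded xl(1)]] setJ v_def av_def by simp
      then show "\<bar>\<Sum>k\<in>Ks M1 M2. cw w1 w2 k * (\<Prod>t\<in>J. v k t)\<bar> \<le> \<delta>"
        using etot_small[OF x[folded d_def] _ J(1) cJ z] unfolding d_def by simp
    qed
    have bd: "\<bar>\<Sum>k\<in>Ks M1 M2. cw w1 w2 k * (\<Prod>s<H. v k s)\<bar>
      \<le> \<delta> * (\<Sum>C\<in>Cs. \<Sum>J\<in>Pow C. \<Prod>s\<in>{..<H}-J. v (kap M1 (cnt C s)) s)"
      unfolding Cs_def by (rule decomp_bound[OF finite_Ks Ks_kap[of M1 M2, folded K_def] nn small])
    have pr: "(\<Prod>s\<in>{..<H}-J. v (kap M1 (cnt C s)) s) = g C J z" if "C \<in> Cs" "J \<in> Pow C" for C J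
    proof -
      have JH: "J \<subseteq> {..<H}" using that unfolding Cs_def by auto
      have "(\<Prod>j<H. fcj Z \<mu>1 \<mu>2 M1 C J j (x!j) (z!j))
         = (\<Prod>j\<in>{..<H}-J. fcj Z \<mu>1 \<mu>2 M1 C J j (x!j) (z!j)) * (\<Prod>j\<in>J. fcj Z \<mu>1 \<mu>2 M1 C J j (x!j) (z!j))"
        by (rule prod.subset_diff[OF JH]) simp
      also have "(\<Prod>j\<in>J. fcj Z \<mu>1 \<mu>2 M1 C J j (x!j) (z!j)) = (1 / real (card Z)) ^ card J"
        unfolding fcj_def by simp
      also have "(\<Prod>j\<in>{..<H}-J. fcj Z \<mu>1 \<mu>2 M1 C J j (x!j) (z!j)) = (\<Prod>s\<in>{..<H}-J. v (kap M1 (cnt C s)) s)"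
        unfolding fcj_def v_def by (rule prod.cong) auto
      finally show ?thesis unfolding g_def using cZ by (simp add: power_one_over)
    qed
    have "(\<Sum>C\<in>Cs. \<Sum>J\<in>Pow C. \<Prod>s\<in>{..<H}-J. v (kap M1 (cnt C s)) s) = (\<Sum>C\<in>Cs. \<Sum>J\<in>Pow C. g C J z)"
      using pr by (intro sum.cong refl) auto
    then show ?thesis unfolding eq using bd by simp
  qed
  have "(\<Sum>z\<in>ZL Z H. Pol \<pi> x z * \<bar>moment M1 w1 \<mu>1 x z - moment M2 w2 \<mu>2 x z\<bar>)
      \<le> (\<Sum>z\<in>ZL Z H. Pol \<pi> x z * (\<delta> * (\<Sum>C\<in>Cs. \<Sum>J\<in>Pow C. g C J z)))"
    by (intro sum_mono mult_left_mono D polnn)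
  also have "\<dots> = \<delta> * (\<Sum>z\<in>ZL Z H. \<Sum>C\<in>Cs. \<Sum>J\<in>Pow C. g C J z * Pol \<pi> x z)"
    by (simp add: sum_distrib_left sum_distrib_right mult_ac)
  also have "\<dots> = \<delta> * (\<Sum>C\<in>Cs. \<Sum>z\<in>ZL Z H. \<Sum>J\<in>Pow C. g C J z * Pol \<pi> x z)"
    by (subst sum.swap) (rule refl)
  also have "\<dots> = \<delta> * (\<Sum>C\<in>Cs. \<Sum>J\<in>Pow C. \<Sum>z\<in>ZL Z H. g C J z * Pol \<pi> x z)"
    by (subst (2) sum.swap) (rule refl)
  also have "\<dots> = \<delta> * (\<Sum>C\<in>Cs. \<Sum>J\<in>Pow C. real (card Z) ^ card J * Wf Z (fcj Z \<mu>1 \<mu>2 M1 C J) \<pi> x)"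
    unfolding Wf_def g_def xl(1) by (simp add: sum_distrib_left mult_ac)
  finally show ?thesis unfolding Cs_def K_def .
qed

lemma card_Cs:
  assumes "H > 0"
  shows "real (card {C\<in>Pow {..<H}. card C < K}) \<le> (2 * real H) ^ min H (K - 1)"
proof -
  define d where "d = min H (K - 1)"
  define L where "L = {l. set l \<subseteq> {..H} \<and> length l = d}"
  have sub: "{C\<in>Pow {..<H}. card C < K} \<subseteq> (\<lambda>l. set l - {H}) ` L"
  proof
    fix C assume "C \<in> {C\<in>Pow {..<H}. card C < K}"
    then have C: "C \<subseteq> {..<H}" "card C < K" by auto
    have fC: "finite C" using C(1) finite_subset by blast
    have "card C \<le> H" using card_mono[OF _ C(1)] by simp
    then have cd: "card C \<le> d" using C(2) unfolding d_def by linarith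
    define l where "l = sorted_list_of_set C @ replicate (d - card C) H"
    have "set l - {H} = C" unfolding l_def using fC C(1) by auto
    moreover have "l \<in> L" unfolding l_def L_def using fC C(1) cd by auto
    ultimately show "C \<in> (\<lambda>l. set l - {H}) ` L" by blast
  qed
  have "card {C\<in>Pow {..<H}. card C < K} \<le> card ((\<lambda>l. set l - {H}) ` L)"
    by (rule card_mono[OF finite_imageI sub]) (simp add: L_def finite_lists_length_eq)
  also have "\<dots> \<le> card L" by (rule card_image_le) (simp add: L_def finite_lists_length_eq)
  also have "card L = (Suc H) ^ d" unfolding L_def by (simp add: card_lists_length_eq)
  finally have "real (card {C\<in>Pow {..<H}. card C < K}) \<le> real (Suc H) ^ d" by (metis of_nat_le_iff of_nat_power)
  also have "\<dots> \<le> (2 * real H) ^ d" using assms by (intro power_mono) auto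
  finally show ?thesis unfolding d_def .
qed




lemma count_bound:
  fixes cZ :: real
  assumes "H > 0" "cZ \<ge> 1"
  shows "(\<Sum>C\<in>{C\<in>Pow {..<H}. card C < K}. \<Sum>J\<in>Pow C. cZ ^ card J) \<le> (4 * real H * cZ) ^ min H (K - 1)"
proof -
  define d where "d = min H (K - 1)"
  define Cs where "Cs = {C\<in>Pow {..<H}. card C < K}"
  have inner: "(\<Sum>J\<in>Pow C. cZ ^ card J) \<le> 2 ^ d * cZ ^ d" if "C \<in> Cs" for C
  proof -
    have C: "C \<subseteq> {..<H}" "card C < K" using that unfolding Cs_def by auto
    have fC: "finite C" using C(1) finite_subset by blast
    have "card C \<le> H" using card_mono[OF _ C(1)] by simp
    then have cd: "card C \<le> d" using C(2) unfolding d_def by linarith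
    have "(\<Sum>J\<in>Pow C. cZ ^ card J) \<le> (\<Sum>J\<in>Pow C. cZ ^ d)"
    proof (rule sum_mono)
      fix J assume "J \<in> Pow C"
      then have "card J \<le> card C" by (intro card_mono[OF fC]) auto
      then have "card J \<le> d" using cd by linarith
      then show "cZ ^ card J \<le> cZ ^ d" by (rule power_increasing[OF _ assms(2)])
    qed
    also have "\<dots> = 2 ^ card C * cZ ^ d" using fC by (simp add: card_Pow)
    also have "\<dots> \<le> 2 ^ d * cZ ^ d"
    proof (rule mult_right_mono)
      show "(2::real) ^ card C \<le> 2 ^ d" by (rule power_increasing[OF cd]) simp
      show "0 \<le> cZ ^ d" using assms(2) by simp
    qed
    finally show ?thesis .
  qed
  have "(\<Sum>C\<in>Cs. \<Sum>J\<in>Pow C. cZ ^ card J) \<le> (\<Sum>C\<in>Cs. 2 ^ d * cZ ^ d)" by (rule sum_mono[OF inner])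
  also have "\<dots> = real (card Cs) * (2 ^ d * cZ ^ d)" by simp
  also have "\<dots> \<le> (2 * real H) ^ d * (2 ^ d * cZ ^ d)"
    using card_Cs[OF assms(1), of K] assms(2) unfolding Cs_def d_def by (intro mult_right_mono) auto
  also have "\<dots> = (4 * real H * cZ) ^ d"
  proof -
    have "(4 * real H * cZ) = (2 * real H) * (2 * cZ)" by simp
    then show ?thesis by (simp only: power_mult_distrib mult_ac)
  qed
  finally show ?thesis unfolding Cs_def d_def .
qed

lemma Base_bounds:
  assumes "rmmdp S A Z T \<nu> M w \<mu>" "length x = H" "H > 0" "set x \<subseteq> S \<times> A"
  shows "0 \<le> Base T \<nu> x \<and> Base T \<nu> x \<le> 1"
proof -
  have fS: "finite S" using assms(1) unfolding rmmdp_def by auto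
  have xi: "x!t \<in> S \<times> A" if "t < H" for t using assms(2,4) that nth_mem by blast
  have nu: "0 \<le> \<nu> s \<and> \<nu> s \<le> 1" if "s \<in> S" for s
    using assms(1) le1_of_sum[OF fS, of \<nu> s] that unfolding rmmdp_def by auto
  have Tb: "0 \<le> T s a s' \<and> T s a s' \<le> 1" if "s \<in> S" "a \<in> A" "s' \<in> S" for s a s'
    using assms(1) le1_of_sum[OF fS, of "T s a" s'] that unfolding rmmdp_def by auto
  have "0 \<le> \<nu> (fst (x!0)) \<and> \<nu> (fst (x!0)) \<le> 1" using nu xi[OF assms(3)] by auto
  moreover have "0 \<le> (\<Prod>t<length x - 1. T (fst (x!t)) (snd (x!t)) (fst (x!Suc t)))
      \<and> (\<Prod>t<length x - 1. T (fst (x!t)) (snd (x!t)) (fst (x!Suc t))) \<le> 1"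
  proof
    have "\<And>t. t \<in> {..<length x - 1} \<Longrightarrow> 0 \<le> T (fst (x!t)) (snd (x!t)) (fst (x!Suc t)) \<and> T (fst (x!t)) (snd (x!t)) (fst (x!Suc t)) \<le> 1"
    proof -
      fix t assume "t \<in> {..<length x - 1}"
      then have "t < H" "Suc t < H" using assms(2) by auto
      then show "0 \<le> T (fst (x!t)) (snd (x!t)) (fst (x!Suc t)) \<and> T (fst (x!t)) (snd (x!t)) (fst (x!Suc t)) \<le> 1"
        using Tb xi by (metis mem_Times_iff)
    qed
    then show "0 \<le> (\<Prod>t<length x - 1. T (fst (x!t)) (snd (x!t)) (fst (x!Suc t)))"
      "(\<Prod>t<length x - 1. T (fst (x!t)) (snd (x!t)) (fst (x!Suc t))) \<le> 1"
      by (auto intro: prod_nonneg prod_le_1)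
  qed
  ultimately show ?thesis unfolding Base_def by (auto intro: mult_le_one)
qed

lemma Pol_le1:
  assumes "\<pi> \<in> policies S A" "finite A" "set x \<subseteq> S \<times> A"
  shows "Pol \<pi> x z \<le> 1"
  unfolding Pol_def
proof (rule prod_le_1)
  fix t assume "t \<in> {..<length x}"
  then have "x!t \<in> S \<times> A" using assms(3) nth_mem by fastforce
  then have s: "fst (x!t) \<in> S" "snd (x!t) \<in> A" by auto
  show "0 \<le> \<pi> (take t (tj x z)) (fst (x!t)) (snd (x!t)) \<and> \<pi> (take t (tj x z)) (fst (x!t)) (snd (x!t)) \<le> 1"
    using pol_nonneg[OF assms(1) s] le1_of_sum[OF assms(2), of "\<pi> (take t (tj x z)) (fst (x!t))" "snd (x!t)"]
      pol_sum[OF assms(1) s(1)] pol_nonneg[OF assms(1) s(1)] s(2) by auto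
qed

lemma moment_bounds:
  assumes "rmmdp S A Z T \<nu> M w \<mu>" "set x \<subseteq> S \<times> A" "set z \<subseteq> Z" "length z = length x"
  shows "0 \<le> moment M w \<mu> x z \<and> moment M w \<mu> x z \<le> 1"
proof -
  have fZ: "finite Z" using assms(1) unfolding rmmdp_def by auto
  have pb: "0 \<le> (\<Prod>i<length x. \<mu> m (fst (x!i)) (snd (x!i)) (z!i)) \<and> (\<Prod>i<length x. \<mu> m (fst (x!i)) (snd (x!i)) (z!i)) \<le> 1"
    if m: "m < M" for m
  proof -
    have "0 \<le> \<mu> m (fst (x!i)) (snd (x!i)) (z!i) \<and> \<mu> m (fst (x!i)) (snd (x!i)) (z!i) \<le> 1" if "i < length x" for i
    proof -
      have xi: "fst (x!i) \<in> S" "snd (x!i) \<in> A" using assms(2) that nth_mem by fastforce+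
      have zi: "z!i \<in> Z" using assms(3,4) that nth_mem by fastforce
      show ?thesis using assms(1) m xi zi le1_of_sum[OF fZ, of "\<mu> m (fst (x!i)) (snd (x!i))" "z!i"]
        unfolding rmmdp_def by auto
    qed
    then show ?thesis by (auto intro: prod_nonneg prod_le_1)
  qed
  have w: "\<forall>m<M. w m \<ge> 0" "(\<Sum>m<M. w m) = 1" using assms(1) unfolding rmmdp_def by auto
  have "0 \<le> moment M w \<mu> x z" unfolding moment_def using pb w by (auto intro!: sum_nonneg)
  moreover have "moment M w \<mu> x z \<le> (\<Sum>m<M. w m)" unfolding moment_def
    using pb w by (intro sum_mono) (auto intro: mult_right_le_one_le)
  ultimately show ?thesis using w by simp
qed

theorem theorem2:
  fixes S :: "'s set" and A :: "'a set" and Z :: "real set" and H :: nat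
    and T :: "'s \<Rightarrow> 'a \<Rightarrow> 's \<Rightarrow> real" and \<nu> :: "'s \<Rightarrow> real"
    and M1 M2 :: nat and w1 w2 :: "nat \<Rightarrow> real"
    and \<mu>1 \<mu>2 :: "nat \<Rightarrow> 's \<Rightarrow> 'a \<Rightarrow> real \<Rightarrow> real"
    and \<delta> :: real and E :: "('s \<times> 'a) list set"
    and \<pi> :: "('s \<times> 'a \<times> real) list \<Rightarrow> 's \<Rightarrow> 'a \<Rightarrow> real"
  assumes "\<delta> > 0" and "H > 0"
    and "rmmdp S A Z T \<nu> M1 w1 \<mu>1" and "rmmdp S A Z T \<nu> M2 w2 \<mu>2"
    and "E \<subseteq> Etot S A H (min H (M1 + M2 - 1))
                 (Xset S A Z (min H (M1 + M2 - 1)) \<delta> M1 w1 \<mu>1 M2 w2 \<mu>2)"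
    and "\<pi> \<in> policies S A"
  shows "(\<Sum>\<tau>\<in>{\<tau>\<in>trajs S A Z H. sa_part \<tau> \<in> E}.
            \<bar>traj_prob T \<nu> M1 w1 \<mu>1 \<pi> \<tau> - traj_prob T \<nu> M2 w2 \<mu>2 \<pi> \<tau>\<bar>)
         \<le> Sup ((\<lambda>\<pi>'. event_prob S A Z H T \<nu> M1 w1 \<mu>1 \<pi>' E) ` policies S A)
            * (4 * real H * real (card Z)) ^ (min H (M1 + M2 - 1)) * \<delta>"
proof -
  define d where "d = min H (M1 + M2 - 1)"
  define Cs where "Cs = {C\<in>Pow {..<H}. card C < M1+M2}"
  define EP where "EP \<pi>' = event_prob S A Z H T \<nu> M1 w1 \<mu>1 \<pi>' E" for \<pi>'
  define Sp where "Sp = Sup (EP ` policies S A)"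
  define cZ where "cZ = real (card Z)"
  define fc where "fc C J = fcj Z \<mu>1 \<mu>2 M1 C J" for C J
  note rm1 = assms(3) and rm2 = assms(4) and pol = assms(6)
  have fin: "finite S" "finite A" "A \<noteq> {}" "finite Z" "Z \<noteq> {}" using rm1 unfolding rmmdp_def by auto
  have cZ1: "cZ \<ge> 1" unfolding cZ_def using fin(4,5) by (simp add: Suc_le_eq card_gt_0_iff)
  have Esub: "E \<subseteq> {x. length x = H \<and> set x \<subseteq> S \<times> A}" using assms(5) EtotD(1,2) by blast
  have finE: "finite E"
    by (rule finite_subset[OF Esub]) (use finite_lists_length_eq[of "S \<times> A" H] fin in \<open>simp add: conj_commute\<close>)
  have EPf: "EP \<pi>' = (\<Sum>x\<in>E. \<Sum>z\<in>ZL Z H. Base T \<nu> x * Pol \<pi>' x z * moment M1 w1 \<mu>1 x z)" for \<pi>'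
    unfolding EP_def by (rule event_prob_tj[OF Esub assms(2)])
  have EPb: "0 \<le> EP \<pi>' \<and> EP \<pi>' \<le> real (card E) * real (card (ZL Z H))" if "\<pi>' \<in> policies S A" for \<pi>'
  proof -
    have t: "0 \<le> Base T \<nu> x * Pol \<pi>' x z * moment M1 w1 \<mu>1 x z \<and> Base T \<nu> x * Pol \<pi>' x z * moment M1 w1 \<mu>1 x z \<le> 1"
      if "x \<in> E" "z \<in> ZL Z H" for x z
    proof -
      have x: "length x = H" "set x \<subseteq> S \<times> A" using Esub that(1) by auto
      have z: "set z \<subseteq> Z" "length z = length x" using that(2) x unfolding ZL_def by auto
      have b: "0 \<le> Base T \<nu> x \<and> Base T \<nu> x \<le> 1" by (rule Base_bounds[OF rm1 x(1) assms(2) x(2)])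
      have p: "0 \<le> Pol \<pi>' x z" "Pol \<pi>' x z \<le> 1" using Pol_nonneg[OF \<open>\<pi>' \<in> policies S A\<close> x(2)] Pol_le1[OF \<open>\<pi>' \<in> policies S A\<close> fin(2) x(2)] by auto
      have m: "0 \<le> moment M1 w1 \<mu>1 x z \<and> moment M1 w1 \<mu>1 x z \<le> 1" by (rule moment_bounds[OF rm1 x(2) z])
      show ?thesis using b p m by (auto intro: mult_le_one mult_nonneg_nonneg)
    qed
    have "0 \<le> EP \<pi>'" unfolding EPf using t by (auto intro!: sum_nonneg)
    moreover have "EP \<pi>' \<le> (\<Sum>x\<in>E. \<Sum>z\<in>ZL Z H. (1::real))" unfolding EPf using t by (intro sum_mono) auto
    ultimately show ?thesis by simp
  qed
  have bdd: "bdd_above (EP ` policies S A)"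
    using EPb by (intro bdd_aboveI[of _ "real (card E) * real (card (ZL Z H))"]) auto
  have EPle: "EP \<pi>' \<le> Sp" if "\<pi>' \<in> policies S A" for \<pi>'
    unfolding Sp_def using bdd that by (intro cSup_upper) auto
  have Sp0: "0 \<le> Sp" using EPle[OF pol] EPb[OF pol] by linarith
  have goodC: "goodf S A Z (fc C J)" if "C \<in> Cs" for C J
    unfolding fc_def using that unfolding Cs_def by (intro fcj_good[OF rm1 rm2]) (auto intro: finite_subset)
  have EPsim: "EP (sim S A Z (fc C J) \<pi>) = (\<Sum>x\<in>E. Base T \<nu> x * Wf Z (fc C J) \<pi> x)" if "C \<in> Cs" for C J
    unfolding EP_def by (rule event_prob_sim[OF Esub assms(2) rm1 goodC[OF that] pol])
  have simpol: "sim S A Z (fc C J) \<pi> \<in> policies S A" if "C \<in> Cs" for C J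
    by (rule sim_policy[OF fin(4,2,3) goodC[OF that] pol])
  have "(\<Sum>\<tau>\<in>{\<tau>\<in>trajs S A Z H. sa_part \<tau> \<in> E}.
            \<bar>traj_prob T \<nu> M1 w1 \<mu>1 \<pi> \<tau> - traj_prob T \<nu> M2 w2 \<mu>2 \<pi> \<tau>\<bar>)
      = (\<Sum>x\<in>E. \<Sum>z\<in>ZL Z H. \<bar>traj_prob T \<nu> M1 w1 \<mu>1 \<pi> (tj x z) - traj_prob T \<nu> M2 w2 \<mu>2 \<pi> (tj x z)\<bar>)"
    by (rule traj_sum[OF Esub])
  also have "\<dots> = (\<Sum>x\<in>E. Base T \<nu> x * (\<Sum>z\<in>ZL Z H. Pol \<pi> x z * \<bar>moment M1 w1 \<mu>1 x z - moment M2 w2 \<mu>2 x z\<bar>))"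
  proof (intro sum.cong refl)
    fix x assume xE: "x \<in> E"
    then have x: "length x = H" "set x \<subseteq> S \<times> A" "x \<noteq> []" using Esub assms(2) by auto
    have b: "0 \<le> Base T \<nu> x" using Base_bounds[OF rm1 x(1) assms(2) x(2)] by simp
    have "(\<Sum>z\<in>ZL Z H. \<bar>traj_prob T \<nu> M1 w1 \<mu>1 \<pi> (tj x z) - traj_prob T \<nu> M2 w2 \<mu>2 \<pi> (tj x z)\<bar>)
        = (\<Sum>z\<in>ZL Z H. Base T \<nu> x * (Pol \<pi> x z * \<bar>moment M1 w1 \<mu>1 x z - moment M2 w2 \<mu>2 x z\<bar>))"
    proof (intro sum.cong refl)
      fix z assume "z \<in> ZL Z H"
      then have lz: "length z = length x" using x unfolding ZL_def by auto
      have p: "0 \<le> Pol \<pi> x z" by (rule Pol_nonneg[OF pol x(2)])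
      show "\<bar>traj_prob T \<nu> M1 w1 \<mu>1 \<pi> (tj x z) - traj_prob T \<nu> M2 w2 \<mu>2 \<pi> (tj x z)\<bar>
         = Base T \<nu> x * (Pol \<pi> x z * \<bar>moment M1 w1 \<mu>1 x z - moment M2 w2 \<mu>2 x z\<bar>)"
        unfolding traj_prob_tj[OF lz x(3)] using b p
        by (simp add: right_diff_distrib[symmetric] abs_mult mult.assoc)
    qed
    then show "(\<Sum>z\<in>ZL Z H. \<bar>traj_prob T \<nu> M1 w1 \<mu>1 \<pi> (tj x z) - traj_prob T \<nu> M2 w2 \<mu>2 \<pi> (tj x z)\<bar>)
        = Base T \<nu> x * (\<Sum>z\<in>ZL Z H. Pol \<pi> x z * \<bar>moment M1 w1 \<mu>1 x z - moment M2 w2 \<mu>2 x z\<bar>)"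
      by (simp add: sum_distrib_left)
  qed
  also have "\<dots> \<le> (\<Sum>x\<in>E. Base T \<nu> x * (\<delta> * (\<Sum>C\<in>Cs. \<Sum>J\<in>Pow C. cZ ^ card J * Wf Z (fc C J) \<pi> x)))"
  proof (rule sum_mono)
    fix x assume xE: "x \<in> E"
    then have x: "length x = H" "set x \<subseteq> S \<times> A" using Esub by auto
    have b: "0 \<le> Base T \<nu> x" using Base_bounds[OF rm1 x(1) assms(2) x(2)] by simp
    have xt: "x \<in> Etot S A H (min H (M1+M2-1)) (Xset S A Z (min H (M1+M2-1)) \<delta> M1 w1 \<mu>1 M2 w2 \<mu>2)"
      using assms(5) xE by blast
    show "Base T \<nu> x * (\<Sum>z\<in>ZL Z H. Pol \<pi> x z * \<bar>moment M1 w1 \<mu>1 x z - moment M2 w2 \<mu>2 x z\<bar>)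
       \<le> Base T \<nu> x * (\<delta> * (\<Sum>C\<in>Cs. \<Sum>J\<in>Pow C. cZ ^ card J * Wf Z (fc C J) \<pi> x))"
      unfolding Cs_def cZ_def fc_def
      by (rule mult_left_mono[OF per_x[OF rm1 rm2 xt Pol_nonneg[OF pol x(2)]] b])
  qed
  also have "\<dots> = \<delta> * (\<Sum>C\<in>Cs. \<Sum>J\<in>Pow C. cZ ^ card J * (\<Sum>x\<in>E. Base T \<nu> x * Wf Z (fc C J) \<pi> x))"
  proof -
    have "(\<Sum>x\<in>E. Base T \<nu> x * (\<delta> * (\<Sum>C\<in>Cs. \<Sum>J\<in>Pow C. cZ ^ card J * Wf Z (fc C J) \<pi> x)))
        = \<delta> * (\<Sum>x\<in>E. \<Sum>C\<in>Cs. \<Sum>J\<in>Pow C. cZ ^ card J * (Base T \<nu> x * Wf Z (fc C J) \<pi> x))"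
      by (simp add: sum_distrib_left mult_ac)
    also have "\<dots> = \<delta> * (\<Sum>C\<in>Cs. \<Sum>x\<in>E. \<Sum>J\<in>Pow C. cZ ^ card J * (Base T \<nu> x * Wf Z (fc C J) \<pi> x))"
      by (subst sum.swap) (rule refl)
    also have "\<dots> = \<delta> * (\<Sum>C\<in>Cs. \<Sum>J\<in>Pow C. \<Sum>x\<in>E. cZ ^ card J * (Base T \<nu> x * Wf Z (fc C J) \<pi> x))"
      by (subst (2) sum.swap) (rule refl)
    also have "\<dots> = \<delta> * (\<Sum>C\<in>Cs. \<Sum>J\<in>Pow C. cZ ^ card J * (\<Sum>x\<in>E. Base T \<nu> x * Wf Z (fc C J) \<pi> x))"
      by (simp add: sum_distrib_left)
    finally show ?thesis .
  qed
  also have "\<dots> = \<delta> * (\<Sum>C\<in>Cs. \<Sum>J\<in>Pow C. cZ ^ card J * EP (sim S A Z (fc C J) \<pi>))"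
    using EPsim by (intro arg_cong[where f="(*) \<delta>"] sum.cong refl) auto
  also have "\<dots> \<le> \<delta> * (\<Sum>C\<in>Cs. \<Sum>J\<in>Pow C. cZ ^ card J * Sp)"
    using EPle[OF simpol] cZ1 assms(1)
    by (intro mult_left_mono sum_mono) auto
  also have "\<dots> = \<delta> * Sp * (\<Sum>C\<in>Cs. \<Sum>J\<in>Pow C. cZ ^ card J)"
    by (simp add: sum_distrib_left sum_distrib_right mult_ac)
  also have "\<dots> \<le> \<delta> * Sp * (4 * real H * cZ) ^ d"
    unfolding Cs_def d_def using count_bound[OF assms(2) cZ1] assms(1) Sp0
    by (intro mult_left_mono) auto
  also have "\<dots> = Sup ((\<lambda>\<pi>. event_prob S A Z H T \<nu> M1 w1 \<mu>1 \<pi> E) ` policies S A)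
            * (4 * real H * real (card Z)) ^ (min H (M1 + M2 - 1)) * \<delta>"
    unfolding Sp_def EP_def cZ_def d_def by (simp add: mult_ac)
  finally show ?thesis .
qed

end
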